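(* Let $(\bm\gamma^{(\alpha)},\Pi^{(\alpha)})_\alpha\subset\mathfrak{C}$ be a family of characteristics satisfying $$\sup_\alpha\Big(\gamma_b^{(\alpha)}+\int_{\mathcal{Z}}z_b\,\mathrm{d}\Pi^{(\alpha)}(\bm z)\Big)<\infty,$$ and let $(N_0^{(\alpha)})_\alpha$ be a tight family of $(0,\infty)$-valued random variables. Let $(N_t^{(\alpha)})_{t\ge0}$ be the population size process with characteristic $(\bm\gamma^{(\alpha)},\Pi^{(\alpha)})$ started in $N_0^{(\alpha)}$. Then for every finite $T\ge0$ and every $\epsilon>0$ there exists a compact $\Gamma\subseteq[0,\infty)$ such that $$\inf_\alpha\mathbb{P}\big(N_t^{(\alpha)}\in\Gamma\text{ for all }t\in[0,T]\big)\ge1-\epsilon.$$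
   Context: Event space: $\mathcal{Z}:=\big([0,1]\times[0,\infty)\big)\setminus\{(0,0),(1,0)\}$, elements $\bm z=(z_d,z_b)$. The set $\mathfrak{C}$ of characteristics consists of pairs $(\bm\gamma,\Pi)$ with $\bm\gamma=(\gamma_d,\gamma_b)\in[0,\infty)^2$ and $\Pi$ a $\sigma$-finite measure on $\mathcal{Z}$ with $\int z_d\,\mathrm{d}\Pi<\infty$, $\int z_b\,\mathrm{d}\Pi<\infty$ and $\gamma_d+\int z_d\,\mathrm{d}\Pi=\gamma_b+\int z_b\,\mathrm{d}\Pi$. The population size process with characteristic $(\bm\gamma,\Pi)$ is the unique solution of the (well-posed) martingale problem for $\mathcal{L}f(N)=(\gamma_b-\gamma_dN)f'(N)+\int_{\mathcal{Z}}\big(f((1-z_d)N+z_b)-f(N)\big)\mathrm{d}\Pi(\bm z)$, $f\in C_c^2(\mathbb{R})$; equivalently the strong solution of $\mathrm{d}N_t=(\gamma_b-\gamma_dN_t)\mathrm{d}t+\int_{\mathcal{Z}}(z_b-z_dN_{t-})\xi(\mathrm{d}t,\mathrm{d}\bm z)$ with $\xi$ a Poisson point process of intensity $\mathrm{d}t\otimes\Pi$. *)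

theory Defs
  imports "HOL-Probability.Probability"
begin

text \<open>Event space Z = ([0,1] x [0,oo)) minus {(0,0),(1,0)}; z = (z_d, z_b).\<close>
definition event_space :: "(real \<times> real) set" where
  "event_space = ({0..1} \<times> {0..}) - {(0,0),(1,0)}"

text \<open>Characteristics (gamma_d, gamma_b, Pm). Pi is a sigma-finite Borel measure on
  R^2 concentrated on the event space (i.e. a measure on Z extended by zero).\<close>
definition characteristic :: "real \<Rightarrow> real \<Rightarrow> (real \<times> real) measure \<Rightarrow> bool" where
  "characteristic gd gb Pm \<longleftrightarrow>
     0 \<le> gd \<and> 0 \<le> gb \<and>
     sets Pm = sets (borel :: (real \<times> real) measure) \<and>
     emeasure Pm (UNIV - event_space) = 0 \<and>
     sigma_finite_measure Pm \<and>
     integrable Pm fst \<and> integrable Pm snd \<and>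
     gd + (\<integral>z. fst z \<partial>Pm) = gb + (\<integral>z. snd z \<partial>Pm)"

definition C2c :: "(real \<Rightarrow> real) \<Rightarrow> bool" where
  "C2c f \<longleftrightarrow> (\<forall>x. f differentiable (at x)) \<and> (\<forall>x. deriv f differentiable (at x)) \<and>
     continuous_on UNIV (deriv (deriv f)) \<and> compact (closure {x. f x \<noteq> 0})"

definition generator :: "real \<Rightarrow> real \<Rightarrow> (real \<times> real) measure \<Rightarrow> (real \<Rightarrow> real) \<Rightarrow> real \<Rightarrow> real" where
  "generator gd gb Pm f N =
     (gb - gd * N) * deriv f N + (\<integral>z. f ((1 - fst z) * N + snd z) - f N \<partial>Pm)"

definition natural_filtration :: "'a measure \<Rightarrow> (real \<Rightarrow> 'a \<Rightarrow> real) \<Rightarrow> real \<Rightarrow> 'a measure" where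
  "natural_filtration M X t =
     sigma (space M) {X s -` B \<inter> space M | s B. 0 \<le> s \<and> s \<le> t \<and> B \<in> sets (borel :: real measure)}"

definition is_martingale :: "'a measure \<Rightarrow> (real \<Rightarrow> 'a measure) \<Rightarrow> (real \<Rightarrow> 'a \<Rightarrow> real) \<Rightarrow> bool" where
  "is_martingale M F X \<longleftrightarrow>
     (\<forall>t\<ge>0. integrable M (X t) \<and> X t \<in> borel_measurable (F t)) \<and>
     (\<forall>s t. 0 \<le> s \<and> s \<le> t \<longrightarrow> (AE \<omega> in M. real_cond_exp M (F s) (X t) \<omega> = X s \<omega>))"

definition cadlag_paths :: "'a measure \<Rightarrow> (real \<Rightarrow> 'a \<Rightarrow> real) \<Rightarrow> bool" where
  "cadlag_paths M X \<longleftrightarrow>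
     (\<forall>\<omega>\<in>space M. \<forall>t\<ge>0. continuous (at_right t) (\<lambda>s. X s \<omega>) \<and>
        (0 < t \<longrightarrow> (\<exists>l. ((\<lambda>s. X s \<omega>) \<longlongrightarrow> l) (at_left t))))"

text \<open>N is a population size process with characteristic (gd, gb, Pm) on the probability
  space M: a cadlag solution of the martingale problem for the generator above.\<close>
definition population_process ::
  "real \<Rightarrow> real \<Rightarrow> (real \<times> real) measure \<Rightarrow> 'a measure \<Rightarrow> (real \<Rightarrow> 'a \<Rightarrow> real) \<Rightarrow> bool" where
  "population_process gd gb Pm M N \<longleftrightarrow>
     prob_space M \<and>
     (\<forall>t\<ge>0. N t \<in> borel_measurable M) \<and>
     cadlag_paths M N \<and>
     (\<forall>f. C2c f \<longrightarrow>
        is_martingale M (natural_filtration M N)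
          (\<lambda>t \<omega>. f (N t \<omega>) - f (N 0 \<omega>) - (LINT s:{0..t}|lborel. generator gd gb Pm f (N s \<omega>))))"

end

theory Submission
  imports Defs
begin

lemma deriv_glue:
  fixes f g h :: "real \<Rightarrow> real"
  assumes g: "(g has_real_derivative D) (at x)" and h: "(h has_real_derivative D) (at x)"
    and el: "\<forall>\<^sub>F y in at_left x. f y = g y" and er: "\<forall>\<^sub>F y in at_right x. f y = h y"
    and fg: "f x = g x" and fh: "f x = h x"
  shows "(f has_real_derivative D) (at x)"
proof -
  have gl: "((\<lambda>y. (g y - g x) / (y - x)) \<longlongrightarrow> D) (at_left x)"
    using g unfolding has_field_derivative_iff by (rule tendsto_mono[rotated]) (simp add: at_le)
  have hr: "((\<lambda>y. (h y - h x) / (y - x)) \<longlongrightarrow> D) (at_right x)"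
    using h unfolding has_field_derivative_iff by (rule tendsto_mono[rotated]) (simp add: at_le)
  have l: "((\<lambda>y. (f y - f x) / (y - x)) \<longlongrightarrow> D) (at_left x)"
    by (rule Lim_transform_eventually[OF gl]) (use el fg in \<open>auto elim: eventually_mono\<close>)
  have r: "((\<lambda>y. (f y - f x) / (y - x)) \<longlongrightarrow> D) (at_right x)"
    by (rule Lim_transform_eventually[OF hr]) (use er fh in \<open>auto elim: eventually_mono\<close>)
  show ?thesis unfolding has_field_derivative_iff using l r filterlim_at_split by blast
qed

definition clamp01 :: "real \<Rightarrow> real" where "clamp01 v = max 0 (min 1 v)"

lemma deriv_clamp:
  fixes q q' :: "real \<Rightarrow> real"
  assumes d: "\<And>x. (q has_real_derivative q' x) (at x)" and z0: "q' 0 = 0" and z1: "q' 1 = 0"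
  shows "((\<lambda>v. q (clamp01 v)) has_real_derivative q' (clamp01 v)) (at v)"
proof -
  have c0: "(((\<lambda>_. q c)) has_real_derivative q' 0) (at v)" for c
    using z0 by (simp add: DERIV_const)
  have c1: "(((\<lambda>_. q c)) has_real_derivative q' 1) (at v)" for c
    using z1 by (simp add: DERIV_const)
  have evl: "\<forall>\<^sub>F y in at_left x. P y" if "\<forall>\<^sub>F y in at x. P y" for P and x :: real
    using that eventually_at_split by blast
  have evr: "\<forall>\<^sub>F y in at_right x. P y" if "\<forall>\<^sub>F y in at x. P y" for P and x :: real
    using that eventually_at_split by blast
  have lt: "\<forall>\<^sub>F y in at x. y < b" if "x < b" for x b :: real
    using order_tendstoD(2)[OF tendsto_ident_at that] .
  have gt: "\<forall>\<^sub>F y in at x. b < y" if "b < x" for x b :: real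
    using order_tendstoD(1)[OF tendsto_ident_at that] .
  have rgt: "\<forall>\<^sub>F y in at_right x. x < y" for x :: real
    using eventually_at_right_real[of x "x+1"] by (rule eventually_mono) auto
  have llt: "\<forall>\<^sub>F y in at_left x. y < x" for x :: real
    using eventually_at_left_real[of "x-1" x] by (rule eventually_mono) auto
  consider "v < 0" | "v = 0" | "0 < v" "v < 1" | "v = 1" | "1 < v" by linarith
  then show ?thesis
  proof cases
    case 1
    have e: "\<forall>\<^sub>F y in at v. q (clamp01 y) = q 0"
      using lt[OF 1] by (rule eventually_mono) (simp add: clamp01_def)
    have cv: "clamp01 v = 0" using 1 by (simp add: clamp01_def)
    show ?thesis unfolding cv
      by (rule deriv_glue[OF c0 c0 evl[OF e] evr[OF e]]) (simp_all add: cv)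
  next
    case 2
    have e1: "\<forall>\<^sub>F y in at_left v. q (clamp01 y) = q 0"
      using llt[of v] by (rule eventually_mono) (use 2 in \<open>auto simp: clamp01_def\<close>)
    have e2: "\<forall>\<^sub>F y in at_right v. q (clamp01 y) = q y"
      using eventually_conj[OF rgt[of v] evr[OF lt[of v 1]]] by (rule eventually_mono) (use 2 in \<open>auto simp: clamp01_def\<close>)
    have cv: "clamp01 v = 0" using 2 by (simp add: clamp01_def)
    have dv: "(q has_real_derivative q' 0) (at v)" using d[of v] 2 by simp
    show ?thesis unfolding cv
      by (rule deriv_glue[OF c0 dv e1 e2]) (use 2 in \<open>simp_all add: clamp01_def\<close>)
  next
    case 3
    have e: "\<forall>\<^sub>F y in at v. q (clamp01 y) = q y"
      using eventually_conj[OF lt[OF 3(2)] gt[OF 3(1)]] by (rule eventually_mono) (simp add: clamp01_def)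
    have cv: "clamp01 v = v" using 3 by (simp add: clamp01_def)
    show ?thesis unfolding cv
      by (rule deriv_glue[OF d d evl[OF e] evr[OF e]]) (simp_all add: cv)
  next
    case 4
    have e1: "\<forall>\<^sub>F y in at_right v. q (clamp01 y) = q 1"
      using rgt[of v] by (rule eventually_mono) (use 4 in \<open>auto simp: clamp01_def\<close>)
    have e2: "\<forall>\<^sub>F y in at_left v. q (clamp01 y) = q y"
      using eventually_conj[OF llt[of v] evl[OF gt[of 0 v]]] by (rule eventually_mono) (use 4 in \<open>auto simp: clamp01_def\<close>)
    have cv: "clamp01 v = 1" using 4 by (simp add: clamp01_def)
    have dv: "(q has_real_derivative q' 1) (at v)" using d[of v] 4 by simp
    show ?thesis unfolding cv
      by (rule deriv_glue[OF dv c1 e2 e1]) (use 4 in \<open>simp_all add: clamp01_def\<close>)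
  next
    case 5
    have e: "\<forall>\<^sub>F y in at v. q (clamp01 y) = q 1"
      using gt[OF 5] by (rule eventually_mono) (simp add: clamp01_def)
    have cv: "clamp01 v = 1" using 5 by (simp add: clamp01_def)
    show ?thesis unfolding cv
      by (rule deriv_glue[OF c1 c1 evl[OF e] evr[OF e]]) (simp_all add: cv)
  qed
qed

definition pq :: "real \<Rightarrow> real" where "pq v = 6* v^5 - 15* v^4 + 10* v^3"
definition pq1 :: "real \<Rightarrow> real" where "pq1 v = 30* v^4 - 60* v^3 + 30* v^2"
definition pq2 :: "real \<Rightarrow> real" where "pq2 v = 120* v^3 - 180* v^2 + 60* v"

lemma pq_deriv: "(pq has_real_derivative pq1 v) (at v)"
  unfolding pq_def pq1_def by (auto intro!: derivative_eq_intros simp: algebra_simps)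
lemma pq1_deriv: "(pq1 has_real_derivative pq2 v) (at v)"
  unfolding pq2_def pq1_def by (auto intro!: derivative_eq_intros simp: algebra_simps)

definition sstep :: "real \<Rightarrow> real" where "sstep u = pq (clamp01 (2*u-1))"
definition sstep1 :: "real \<Rightarrow> real" where "sstep1 u = 2 * pq1 (clamp01 (2*u-1))"
definition sstep2 :: "real \<Rightarrow> real" where "sstep2 u = 4 * pq2 (clamp01 (2*u-1))"

lemma sstep_deriv: "(sstep has_real_derivative sstep1 u) (at u)"
proof -
  have h1: "((\<lambda>v. pq (clamp01 v)) has_real_derivative pq1 (clamp01 (2*u-1))) (at (2*u-1))"
    by (rule deriv_clamp[OF pq_deriv]) (simp_all add: pq1_def)
  moreover have h2: "((\<lambda>u. 2*u-1) has_real_derivative 2) (at u)"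
    by (auto intro!: derivative_eq_intros)
  ultimately have "((\<lambda>u. pq (clamp01 (2*u-1))) has_real_derivative pq1 (clamp01 (2*u-1)) * 2) (at u)"
    using DERIV_chain2[OF h1 h2] by simp
  then show ?thesis unfolding sstep_def sstep1_def by (simp add: mult.commute)
qed

lemma sstep1_deriv: "(sstep1 has_real_derivative sstep2 u) (at u)"
proof -
  have h1: "((\<lambda>v. pq1 (clamp01 v)) has_real_derivative pq2 (clamp01 (2*u-1))) (at (2*u-1))"
    by (rule deriv_clamp[OF pq1_deriv]) (simp_all add: pq2_def)
  moreover have h2: "((\<lambda>u. 2*u-1) has_real_derivative 2) (at u)"
    by (auto intro!: derivative_eq_intros)
  ultimately have "((\<lambda>u. pq1 (clamp01 (2*u-1))) has_real_derivative pq2 (clamp01 (2*u-1)) * 2) (at u)"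
    using DERIV_chain2[OF h1 h2] by simp
  from DERIV_cmult[OF this, of 2] show ?thesis unfolding sstep1_def sstep2_def by (simp add: algebra_simps)
qed

lemma sstep2_cont: "continuous_on UNIV sstep2"
  unfolding sstep2_def pq2_def clamp01_def by (intro continuous_intros)

lemma clamp01_range: "0 \<le> clamp01 v" "clamp01 v \<le> 1"
  by (auto simp: clamp01_def)

lemma sstep1_bounds: "0 \<le> sstep1 u" "sstep1 u \<le> 4"
proof -
  define c where "c = clamp01 (2*u-1)"
  have c: "0 \<le> c" "c \<le> 1" using clamp01_range c_def by auto
  have e: "pq1 c = 30 * (c*(1-c))^2" unfolding pq1_def by (simp add: algebra_simps power2_eq_square power4_eq_xxxx power3_eq_cube)
  have "c*(1-c) \<le> 1/4" using zero_le_power2[of "c - 1/2"] by (simp add: power2_eq_square algebra_simps)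
  moreover have "0 \<le> c*(1-c)" using c by simp
  ultimately have "(c*(1-c))^2 \<le> (1/4)^2" by (intro power_mono) auto
  then have "(c*(1-c))^2 \<le> 1/16" by (simp add: power2_eq_square)
  then show "0 \<le> sstep1 u" "sstep1 u \<le> 4" unfolding sstep1_def c_def[symmetric] e by auto
qed

lemma sstep_low: "u \<le> 1/2 \<Longrightarrow> sstep u = 0" and sstep1_low: "u \<le> 1/2 \<Longrightarrow> sstep1 u = 0"
  and sstep_high: "1 \<le> u \<Longrightarrow> sstep u = 1"
  by (auto simp: sstep_def sstep1_def clamp01_def pq_def pq1_def)

lemma sstep_mono_lip: assumes "a \<le> b" shows "sstep a \<le> sstep b" "sstep b - sstep a \<le> 4 * (b - a)"
proof -
  have "sstep a \<le> sstep b \<and> sstep b - sstep a \<le> 4 * (b - a)"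
  proof (cases "a = b")
    case False
    then have "a < b" using assms by simp
    from MVT2[OF this, of sstep sstep1] sstep_deriv obtain z where
      "sstep b - sstep a = (b - a) * sstep1 z" by blast
    moreover have "0 \<le> sstep1 z" "sstep1 z \<le> 4" by (rule sstep1_bounds)+
    moreover have "sstep1 z * (b - a) \<le> 4 * (b - a)" "0 \<le> sstep1 z * (b - a)"
      using \<open>a < b\<close> \<open>sstep1 z \<le> 4\<close> \<open>0 \<le> sstep1 z\<close> by (intro mult_right_mono mult_nonneg_nonneg; simp)+
    ultimately show ?thesis by (simp add: mult.commute)
  qed simp
  then show "sstep a \<le> sstep b" "sstep b - sstep a \<le> 4 * (b - a)" by auto
qed

lemma sstep_range: "0 \<le> sstep u" "sstep u \<le> 1"
proof -
  have "sstep (min u (1/2)) \<le> sstep u" by (rule sstep_mono_lip) simp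
  then show "0 \<le> sstep u" by (simp add: sstep_low)
  have "sstep u \<le> sstep (max u 1)" by (rule sstep_mono_lip) simp
  then show "sstep u \<le> 1" by (simp add: sstep_high)
qed

lemma sstep_lip: "\<bar>sstep a - sstep b\<bar> \<le> 4 * \<bar>a - b\<bar>"
  using sstep_mono_lip[of a b] sstep_mono_lip[of b a] by (cases "a \<le> b") auto

definition phi :: "real \<Rightarrow> real \<Rightarrow> real \<Rightarrow> real" where
  "phi R d x = sstep (x/R) + sstep (-x/d)"
definition phi1 :: "real \<Rightarrow> real \<Rightarrow> real \<Rightarrow> real" where
  "phi1 R d x = sstep1 (x/R) / R - sstep1 (-x/d) / d"
definition phi2 :: "real \<Rightarrow> real \<Rightarrow> real \<Rightarrow> real" where
  "phi2 R d x = sstep2 (x/R) / R^2 + sstep2 (-x/d) / d^2"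
definition tf :: "real \<Rightarrow> real \<Rightarrow> real \<Rightarrow> real" where
  "tf R d x = phi R d x - 1"

lemma sstep_comp_deriv:
  assumes "\<And>u. (g has_real_derivative g' u) (at u)"
  shows "((\<lambda>x. g (x/c)) has_real_derivative g' (x/c) / c) (at x)"
proof -
  have h2: "((\<lambda>x. x/c) has_real_derivative 1/c) (at x)" using DERIV_cdivide[OF DERIV_ident, of c x] by simp
  show ?thesis using DERIV_chain2[OF assms h2] by simp
qed

lemma phi_deriv: "(phi R d has_real_derivative phi1 R d x) (at x)"
proof -
  have a: "((\<lambda>x. sstep (x/R)) has_real_derivative sstep1 (x/R) / R) (at x)"
    by (rule sstep_comp_deriv[OF sstep_deriv])
  have b: "((\<lambda>x. sstep (x/(-d))) has_real_derivative sstep1 (x/(-d)) / (-d)) (at x)"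
    by (rule sstep_comp_deriv[OF sstep_deriv])
  have e: "\<And>x. x/(-d) = -x/d" by simp
  have "((\<lambda>x. sstep (x/R) + sstep (x/(-d))) has_real_derivative sstep1 (x/R) / R + sstep1 (x/(-d)) / (-d)) (at x)"
    by (rule DERIV_add[OF a b])
  then show ?thesis unfolding phi_def[abs_def] phi1_def e by simp
qed

lemma phi1_deriv: assumes "R \<noteq> 0" "d \<noteq> 0" shows "(phi1 R d has_real_derivative phi2 R d x) (at x)"
proof -
  have a: "((\<lambda>x. sstep1 (x/R)) has_real_derivative sstep2 (x/R) / R) (at x)"
    by (rule sstep_comp_deriv[OF sstep1_deriv])
  have b: "((\<lambda>x. sstep1 (x/(-d))) has_real_derivative sstep2 (x/(-d)) / (-d)) (at x)"
    by (rule sstep_comp_deriv[OF sstep1_deriv])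
  have e: "\<And>x. x/(-d) = -x/d" by simp
  have "((\<lambda>x. sstep1 (x/R) / R - sstep1 (x/(-d)) / d) has_real_derivative sstep2 (x/R) / R / R - sstep2 (x/(-d)) / (-d) / d) (at x)"
    by (intro DERIV_diff DERIV_cdivide a b)
  then show ?thesis unfolding phi2_def phi1_def[abs_def] e using assms by (simp add: power2_eq_square divide_simps)
qed

lemma tf_deriv: "(tf R d has_real_derivative phi1 R d x) (at x)"
  unfolding tf_def[abs_def] using DERIV_diff[OF phi_deriv DERIV_const] by simp

lemma deriv_tf: "deriv (tf R d) = phi1 R d"
  using tf_deriv DERIV_imp_deriv by blast

lemma deriv_phi1: "R \<noteq> 0 \<Longrightarrow> d \<noteq> 0 \<Longrightarrow> deriv (phi1 R d) = phi2 R d"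
  using phi1_deriv DERIV_imp_deriv by blast

lemma phi2_cont: "continuous_on UNIV (phi2 R d)"
proof -
  have eq: "phi2 R d = (\<lambda>x. sstep2 (x * (1/R)) * (1/R^2) + sstep2 (x * (-1/d)) * (1/d^2))"
    by (rule ext) (simp add: phi2_def)
  show ?thesis unfolding eq
    by (intro continuous_intros continuous_on_compose2[OF sstep2_cont]) auto
qed

lemma phi_pos: assumes "0 \<le> x" "0 < d" shows "phi R d x = sstep (x/R)"
proof -
  have "-x/d \<le> 0" using assms divide_nonpos_pos[of "-x" d] by simp
  then have "sstep (-x/d) = 0" by (intro sstep_low) linarith
  then show ?thesis unfolding phi_def by simp
qed
lemma phi_neg: "x \<le> 0 \<Longrightarrow> 0 < R \<Longrightarrow> phi R d x = sstep (-x/d)"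
  unfolding phi_def using divide_nonpos_pos[of x R] sstep_low[of "x/R"] by simp
lemma phi1_pos: assumes "0 \<le> x" "0 < d" shows "phi1 R d x = sstep1 (x/R) / R"
proof -
  have "-x/d \<le> 0" using assms divide_nonpos_pos[of "-x" d] by simp
  then have "sstep1 (-x/d) = 0" by (intro sstep1_low) linarith
  then show ?thesis unfolding phi1_def by simp
qed
lemma phi1_neg: "x \<le> 0 \<Longrightarrow> 0 < R \<Longrightarrow> phi1 R d x = - sstep1 (-x/d) / d"
  unfolding phi1_def using divide_nonpos_pos[of x R] sstep1_low[of "x/R"] by simp

lemma phi_range: assumes "0 < R" "0 < d" shows "0 \<le> phi R d x" "phi R d x \<le> 1"
  using phi_pos[of x d R] phi_neg[of x R d] assms sstep_range by (cases "0 \<le> x"; auto)+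

lemma tf_zero: assumes "0 < R" "0 < d" "tf R d x \<noteq> 0" shows "-d < x" "x < R"
proof -
  show "-d < x"
  proof (rule ccontr)
    assume "\<not> -d < x"
    then have "phi R d x = 1" using phi_neg[of x R d] assms sstep_high[of "-x/d"] by (simp add: field_simps)
    then show False using assms(3) by (simp add: tf_def)
  qed
  show "x < R"
  proof (rule ccontr)
    assume "\<not> x < R"
    then have "phi R d x = 1" using phi_pos[of x d R] assms sstep_high[of "x/R"] by (simp add: field_simps)
    then show False using assms(3) by (simp add: tf_def)
  qed
qed

lemma C2c_tf: assumes "0 < R" "0 < d" shows "C2c (tf R d)"
proof -
  have nz: "R \<noteq> 0" "d \<noteq> 0" using assms by auto
  have "{x. tf R d x \<noteq> 0} \<subseteq> {-d..R}" using tf_zero[OF assms] by fastforce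
  then have "closure {x. tf R d x \<noteq> 0} \<subseteq> {-d..R}" by (intro closure_minimal) auto
  then have c1: "compact (closure {x. tf R d x \<noteq> 0})"
    using compact_Int_closed[OF compact_Icc[of "-d" R] closed_closure[of "{x. tf R d x \<noteq> 0}"]]
    by (simp add: Int_absorb1)
  have c2: "\<forall>x. tf R d differentiable (at x)" using tf_deriv real_differentiable_def by blast
  have c3: "\<forall>x. deriv (tf R d) differentiable (at x)" unfolding deriv_tf using phi1_deriv[OF nz] real_differentiable_def by blast
  have c4: "deriv (deriv (tf R d)) = phi2 R d" unfolding deriv_tf using deriv_phi1[OF nz] by simp
  show ?thesis unfolding C2c_def using c1 c2 c3 c4 phi2_cont by metis
qed

lemma phi1_bound_pos: "0 \<le> x \<Longrightarrow> 0 < R \<Longrightarrow> 0 < d \<Longrightarrow> 0 \<le> phi1 R d x \<and> phi1 R d x \<le> 4 / R"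
  using phi1_pos[of x d R] sstep1_bounds[of "x/R"] by (simp add: divide_right_mono)
lemma phi1_bound_neg: "x \<le> 0 \<Longrightarrow> 0 < R \<Longrightarrow> 0 < d \<Longrightarrow> phi1 R d x \<le> 0"
  using phi1_neg[of x R d] sstep1_bounds[of "-x/d"] by simp

lemma phi_lip: assumes "0 < R" "0 < d" shows "\<bar>phi R d y - phi R d x\<bar> \<le> (4/R + 4/d) * \<bar>y - x\<bar>"
proof -
  have "\<bar>phi R d y - phi R d x\<bar> \<le> \<bar>sstep (y/R) - sstep (x/R)\<bar> + \<bar>sstep (-y/d) - sstep (-x/d)\<bar>"
    unfolding phi_def by linarith
  also have "\<dots> \<le> 4 * \<bar>y/R - x/R\<bar> + 4 * \<bar>-y/d - -x/d\<bar>" by (intro add_mono sstep_lip)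
  also have "\<dots> = (4/R + 4/d) * \<bar>y - x\<bar>" using assms
    by (simp add: abs_divide diff_divide_distrib[symmetric] algebra_simps)
  finally show ?thesis .
qed

lemma jump_bound:
  assumes R: "0 < R" and d: "0 < d" and zd: "0 \<le> zd" "zd \<le> 1" and zb: "0 \<le> zb"
  shows "phi R d ((1 - zd) * x + zb) - phi R d x \<le> 4 / R * zb"
proof -
  define y where "y = (1 - zd) * x + zb"
  have "phi R d y - phi R d x \<le> 4 / R * zb"
  proof (cases "0 \<le> x")
    case True
    have y0: "0 \<le> y" unfolding y_def using True zd zb by simp
    show ?thesis
    proof (cases "x \<le> y")
      case True
      have "sstep (y/R) - sstep (x/R) \<le> 4 * (y/R - x/R)" using True R
        by (intro sstep_mono_lip(2)) (simp add: divide_right_mono)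
      also have "\<dots> = 4/R * (y - x)" by (simp add: diff_divide_distrib)
      also have "\<dots> \<le> 4/R * zb" using R \<open>0 \<le> x\<close> zd unfolding y_def
        by (intro mult_left_mono) (auto simp: algebra_simps)
      finally show ?thesis using phi_pos[OF y0 d] phi_pos[OF \<open>0\<le>x\<close> d] by simp
    next
      case False
      have "sstep (y/R) \<le> sstep (x/R)" using False R by (intro sstep_mono_lip(1)) (simp add: divide_right_mono)
      moreover have "0 \<le> 4/R*zb" using R zb by simp
      ultimately show ?thesis using phi_pos[OF y0 d] phi_pos[OF \<open>0\<le>x\<close> d] by simp
    qed
  next
    case False
    show ?thesis
    proof (cases "0 \<le> y")
      case True
      have "y \<le> zb" unfolding y_def using False zd by (simp add: mult_nonneg_nonpos)
      have "sstep (y/R) - sstep (0/R) \<le> 4 * (y/R - 0/R)" using True R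
        by (intro sstep_mono_lip(2)) simp
      then have "phi R d y \<le> 4/R * y" using phi_pos[OF True d] by (simp add: sstep_low)
      also have "\<dots> \<le> 4/R * zb" using \<open>y \<le> zb\<close> R by (intro mult_left_mono) auto
      finally show ?thesis using phi_range[OF R d, of x] by simp
    next
      case False
      have "x * zd \<le> 0" using \<open>\<not> 0 \<le> x\<close> zd mult_nonpos_nonneg[of x zd] by simp
      then have "x \<le> y" unfolding y_def using zb by (simp add: algebra_simps)
      then have "sstep (-y/d) \<le> sstep (-x/d)" using d by (intro sstep_mono_lip(1)) (simp add: divide_right_mono)
      moreover have "0 \<le> 4/R*zb" using R zb by simp
      moreover have "phi R d y = sstep (-y/d)" "phi R d x = sstep (-x/d)"
        using phi_neg[of y R d] phi_neg[of x R d] False \<open>\<not> 0 \<le> x\<close> R by auto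
      ultimately show ?thesis by linarith
    qed
  qed
  then show ?thesis unfolding y_def .
qed

lemma drift_bound:
  assumes R: "0 < R" and d: "0 < d" and "0 \<le> gd" "0 \<le> gb"
  shows "(gb - gd * x) * phi1 R d x \<le> gb * (4 / R)"
proof (cases "0 \<le> x")
  case True
  note b = phi1_bound_pos[OF True R d]
  have "(gb - gd * x) * phi1 R d x = gb * phi1 R d x - (gd * x) * phi1 R d x" by (simp add: algebra_simps)
  also have "\<dots> \<le> gb * phi1 R d x" using b assms True by simp
  also have "\<dots> \<le> gb * (4/R)" using b assms by (intro mult_left_mono) auto
  finally show ?thesis .
next
  case False
  have "phi1 R d x \<le> 0" using phi1_bound_neg[of x R d] False R d by simp
  moreover have "0 \<le> gb - gd * x" using False assms mult_nonneg_nonpos[of gd x] by simp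
  ultimately have "(gb - gd * x) * phi1 R d x \<le> 0" by (simp add: mult_nonneg_nonpos)
  also have "0 \<le> gb * (4/R)" using assms by simp
  finally show ?thesis .
qed

lemma event_space_borel: "event_space \<in> sets (borel :: (real \<times> real) measure)"
proof -
  have "{0..1::real} \<times> {0::real..} \<in> sets borel" by (intro borel_closed closed_Times) auto
  moreover have "{(0::real,0::real),(1,0)} \<in> sets borel" by (intro borel_closed finite_imp_closed) auto
  ultimately show ?thesis unfolding event_space_def by (rule sets.Diff)
qed

lemma char_AE:
  assumes "characteristic gd gb Pm"
  shows "AE z in Pm. z \<in> event_space"
proof (rule AE_I')
  have s: "sets Pm = sets borel" using assms by (simp add: characteristic_def)
  have "UNIV - event_space \<in> sets Pm" unfolding s using event_space_borel by auto
  then show "UNIV - event_space \<in> null_sets Pm" using assms by (simp add: characteristic_def null_sets_def)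
qed auto

lemma event_spaceD: "z \<in> event_space \<Longrightarrow> 0 \<le> fst z \<and> fst z \<le> 1 \<and> 0 \<le> snd z"
  by (auto simp: event_space_def)

lemma gen_eq:
  "generator gd gb Pm (tf R d) x =
     (gb - gd*x) * phi1 R d x + (\<integral>z. phi R d ((1 - fst z) * x + snd z) - phi R d x \<partial>Pm)"
  unfolding generator_def deriv_tf tf_def by simp

lemma gen_upper:
  assumes ch: "characteristic gd gb Pm" and R: "0 < R" and d: "0 < d"
  shows "generator gd gb Pm (tf R d) x \<le> 4/R * (gb + (\<integral>z. snd z \<partial>Pm))"
proof -
  have c: "0 \<le> gd" "0 \<le> gb" "integrable Pm snd" using ch by (auto simp: characteristic_def)
  have AE: "AE z in Pm. z \<in> event_space" by (rule char_AE[OF ch])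
  have "(\<integral>z. phi R d ((1 - fst z) * x + snd z) - phi R d x \<partial>Pm) \<le> (\<integral>z. 4/R * snd z \<partial>Pm)"
  proof (rule integral_mono_AE')
    show "integrable Pm (\<lambda>z. 4/R * snd z)" using c by simp
    show "AE z in Pm. phi R d ((1 - fst z) * x + snd z) - phi R d x \<le> 4/R * snd z"
      using AE
    proof eventually_elim
      case (elim z)
      show ?case using event_spaceD[OF elim] jump_bound[OF R d, of "fst z" "snd z" x] by simp
    qed
    show "AE z in Pm. 0 \<le> 4/R * snd z"
      using AE by eventually_elim (use event_spaceD R in auto)
  qed
  also have "\<dots> = 4/R * (\<integral>z. snd z \<partial>Pm)" by simp
  finally have j: "(\<integral>z. phi R d ((1 - fst z) * x + snd z) - phi R d x \<partial>Pm) \<le> 4/R * (\<integral>z. snd z \<partial>Pm)" .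
  have "(gb - gd*x) * phi1 R d x \<le> gb * (4/R)" by (rule drift_bound[OF R d c(1) c(2)])
  moreover have "4/R * (gb + (\<integral>z. snd z \<partial>Pm)) = gb * (4/R) + 4/R * (\<integral>z. snd z \<partial>Pm)" by (simp add: algebra_simps add_divide_distrib)
  ultimately show ?thesis using j unfolding gen_eq by linarith
qed

lemma phi1_abs: assumes "0 < R" "0 < d" shows "\<bar>phi1 R d x\<bar> \<le> 4/R + 4/d"
proof -
  have a: "0 \<le> sstep1 (x/R) / R" "sstep1 (x/R) / R \<le> 4/R"
    using sstep1_bounds[of "x/R"] assms by (simp_all add: divide_right_mono)
  have b: "0 \<le> sstep1 (-x/d) / d" "sstep1 (-x/d) / d \<le> 4/d"
    using sstep1_bounds[of "-x/d"] assms by (simp_all add: divide_right_mono)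
  show ?thesis unfolding phi1_def abs_le_iff using a b by linarith
qed

lemma gen_abs:
  assumes ch: "characteristic gd gb Pm" and R: "0 < R" and d: "0 < d"
  shows "\<bar>generator gd gb Pm (tf R d) x\<bar> \<le>
     (4/R + 4/d) * ((gb + gd * \<bar>x\<bar>) + ((\<integral>z. snd z \<partial>Pm) + \<bar>x\<bar> * (\<integral>z. fst z \<partial>Pm)))"
proof -
  define L where "L = 4/R + 4/d"
  have L: "0 \<le> L" using R d by (simp add: L_def)
  have c: "0 \<le> gd" "0 \<le> gb" "integrable Pm snd" "integrable Pm fst" using ch by (auto simp: characteristic_def)
  have AE: "AE z in Pm. z \<in> event_space" by (rule char_AE[OF ch])
  have "norm (\<integral>z. phi R d ((1 - fst z) * x + snd z) - phi R d x \<partial>Pm)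
        \<le> (\<integral>z. norm (phi R d ((1 - fst z) * x + snd z) - phi R d x) \<partial>Pm)"
    by (rule integral_norm_bound)
  also have "\<dots> \<le> (\<integral>z. L * (snd z + \<bar>x\<bar> * fst z) \<partial>Pm)"
  proof (rule integral_mono_AE')
    show "integrable Pm (\<lambda>z. L * (snd z + \<bar>x\<bar> * fst z))" using c by simp
    show "AE z in Pm. norm (phi R d ((1 - fst z) * x + snd z) - phi R d x) \<le> L * (snd z + \<bar>x\<bar> * fst z)"
      using AE
    proof eventually_elim
      case (elim z)
      have z: "0 \<le> fst z" "fst z \<le> 1" "0 \<le> snd z" using event_spaceD[OF elim] by auto
      have "norm (phi R d ((1 - fst z) * x + snd z) - phi R d x) \<le> L * \<bar>((1 - fst z) * x + snd z) - x\<bar>"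
        unfolding L_def real_norm_def by (rule phi_lip[OF R d])
      also have "\<bar>((1 - fst z) * x + snd z) - x\<bar> = \<bar>snd z - fst z * x\<bar>" by (simp add: algebra_simps)
      also have "\<dots> \<le> \<bar>snd z\<bar> + \<bar>fst z * x\<bar>" by (rule abs_triangle_ineq4)
      also have "\<dots> = snd z + \<bar>x\<bar> * fst z" using z by (simp add: abs_mult mult.commute)
      finally show ?case using L by (simp add: mult_left_mono order_trans)
    qed
    show "AE z in Pm. 0 \<le> L * (snd z + \<bar>x\<bar> * fst z)"
      using AE by eventually_elim (use event_spaceD L in auto)
  qed
  also have "\<dots> = L * ((\<integral>z. snd z \<partial>Pm) + \<bar>x\<bar> * (\<integral>z. fst z \<partial>Pm))"
    using c by (simp add: integral_add)
  finally have j: "norm (\<integral>z. phi R d ((1 - fst z) * x + snd z) - phi R d x \<partial>Pm) \<le> L * ((\<integral>z. snd z \<partial>Pm) + \<bar>x\<bar> * (\<integral>z. fst z \<partial>Pm))" .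
  have "\<bar>(gb - gd*x) * phi1 R d x\<bar> = \<bar>gb - gd*x\<bar> * \<bar>phi1 R d x\<bar>" by (simp add: abs_mult)
  also have "\<dots> \<le> (gb + gd * \<bar>x\<bar>) * L"
  proof (intro mult_mono)
    show "\<bar>gb - gd*x\<bar> \<le> gb + gd * \<bar>x\<bar>" using abs_triangle_ineq4[of gb "gd*x"] c by (simp add: abs_mult)
    show "\<bar>phi1 R d x\<bar> \<le> L" unfolding L_def by (rule phi1_abs[OF R d])
  qed (use c in auto)
  finally have dr: "\<bar>(gb - gd*x) * phi1 R d x\<bar> \<le> L * (gb + gd * \<bar>x\<bar>)" by (simp add: mult.commute)
  have j': "\<bar>\<integral>z. phi R d ((1 - fst z) * x + snd z) - phi R d x \<partial>Pm\<bar> \<le> L * ((\<integral>z. snd z \<partial>Pm) + \<bar>x\<bar> * (\<integral>z. fst z \<partial>Pm))"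
    using j unfolding real_norm_def .
  have "\<bar>generator gd gb Pm (tf R d) x\<bar> \<le> L * (gb + gd * \<bar>x\<bar>) + L * ((\<integral>z. snd z \<partial>Pm) + \<bar>x\<bar> * (\<integral>z. fst z \<partial>Pm))"
    unfolding gen_eq using j' dr by linarith
  then show ?thesis unfolding L_def[symmetric] by (simp only: distrib_left)
qed

lemma phi_meas[measurable]: "phi R d \<in> borel_measurable borel"
  by (rule borel_measurable_continuous_onI) (meson DERIV_isCont continuous_at_imp_continuous_on phi_deriv)
lemma phi1_meas: assumes "0 < R" "0 < d" shows "phi1 R d \<in> borel_measurable borel"
proof -
  have "R \<noteq> 0" "d \<noteq> 0" using assms by auto
  then have "\<forall>x. isCont (phi1 R d) x" using DERIV_isCont phi1_deriv by blast
  then show ?thesis by (intro borel_measurable_continuous_onI continuous_at_imp_continuous_on) auto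
qed

lemma gen_meas:
  assumes ch: "characteristic gd gb Pm" and R: "0 < R" and d: "0 < d"
  shows "generator gd gb Pm (tf R d) \<in> borel_measurable borel"
proof -
  have s: "sets Pm = sets borel" using ch by (simp add: characteristic_def)
  interpret sigma_finite_measure Pm using ch by (simp add: characteristic_def)
  have s': "sets Pm = sets (borel \<Otimes>\<^sub>M borel :: (real \<times> real) measure)" unfolding borel_prod by (rule s)
  have m0: "(\<lambda>(x, z). phi R d ((1 - fst z) * x + snd z) - phi R d x) \<in> borel_measurable ((borel :: real measure) \<Otimes>\<^sub>M (borel \<Otimes>\<^sub>M borel :: (real \<times> real) measure))"
    by measurable
  have eq: "borel_measurable ((borel :: real measure) \<Otimes>\<^sub>M Pm) = borel_measurable (borel \<Otimes>\<^sub>M (borel \<Otimes>\<^sub>M borel))"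
    by (rule measurable_cong_sets[OF sets_pair_measure_cong[OF refl s'] refl])
  have "(\<lambda>(x, z). phi R d ((1 - fst z) * x + snd z) - phi R d x) \<in> borel_measurable (borel \<Otimes>\<^sub>M Pm)"
    unfolding eq by (rule m0)
  then have i: "(\<lambda>x. \<integral>z. phi R d ((1 - fst z) * x + snd z) - phi R d x \<partial>Pm) \<in> borel_measurable borel"
    by (rule borel_measurable_lebesgue_integral[of "\<lambda>x z. phi R d ((1 - fst z) * x + snd z) - phi R d x", simplified])
  have p1: "phi1 R d \<in> borel_measurable borel" using R d by (rule phi1_meas)
  have "(\<lambda>x. (gb - gd*x) * phi1 R d x + (\<integral>z. phi R d ((1 - fst z) * x + snd z) - phi R d x \<partial>Pm)) \<in> borel_measurable borel"
    using i p1 by measurable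
  then show ?thesis unfolding gen_eq[abs_def] .
qed

lemma local_bound:
  fixes g :: "real \<Rightarrow> real"
  assumes rc: "continuous (at_right u) g" and ll: "0 < u \<Longrightarrow> \<exists>l. (g \<longlongrightarrow> l) (at_left u)" and u: "0 \<le> u"
  shows "\<exists>e>0. \<exists>B. \<forall>v. 0 \<le> v \<and> \<bar>v - u\<bar> < e \<longrightarrow> \<bar>g v\<bar> \<le> B"
proof -
  have "\<forall>\<^sub>F v in at_right u. dist (g v) (g u) < 1"
    using rc unfolding continuous_within by (rule tendstoD) simp
  then obtain b1 where b1: "b1 > u" "\<And>y. u < y \<Longrightarrow> y < b1 \<Longrightarrow> dist (g y) (g u) < 1"
    unfolding eventually_at_right_field by blast
  obtain b2 l where b2: "b2 < u" "\<And>y. b2 < y \<Longrightarrow> y < u \<Longrightarrow> 0 < u \<Longrightarrow> dist (g y) l < 1"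
  proof (cases "0 < u")
    case True
    then obtain l where "(g \<longlongrightarrow> l) (at_left u)" using ll by blast
    then have "\<forall>\<^sub>F v in at_left u. dist (g v) l < 1" by (rule tendstoD) simp
    then obtain b where "b < u" "\<And>y. b < y \<Longrightarrow> y < u \<Longrightarrow> dist (g y) l < 1"
      unfolding eventually_at_left_field by blast
    then show ?thesis using that by blast
  next
    case False
    then show ?thesis using that[of "u - 1" 0] by auto
  qed
  define e where "e = min (b1 - u) (u - b2)"
  have e: "0 < e" using b1 b2 by (simp add: e_def)
  have "\<forall>v. 0 \<le> v \<and> \<bar>v - u\<bar> < e \<longrightarrow> \<bar>g v\<bar> \<le> \<bar>g u\<bar> + \<bar>l\<bar> + 1"
  proof (intro allI impI)
    fix v assume v: "0 \<le> v \<and> \<bar>v - u\<bar> < e"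
    consider "v = u" | "u < v" | "v < u" by linarith
    then show "\<bar>g v\<bar> \<le> \<bar>g u\<bar> + \<bar>l\<bar> + 1"
    proof cases
      case 2
      then have "dist (g v) (g u) < 1" using b1 v by (intro b1(2)) (auto simp: e_def)
      then show ?thesis by (simp add: dist_real_def)
    next
      case 3
      then have "dist (g v) l < 1" using b2 v u by (intro b2(2)) (auto simp: e_def)
      then show ?thesis by (simp add: dist_real_def)
    qed simp
  qed
  then show ?thesis using e by blast
qed

lemma cadlag_bounded:
  fixes g :: "real \<Rightarrow> real"
  assumes rc: "\<And>u. 0 \<le> u \<Longrightarrow> continuous (at_right u) g"
    and ll: "\<And>u. 0 < u \<Longrightarrow> \<exists>l. (g \<longlongrightarrow> l) (at_left u)"
  shows "\<exists>B. \<forall>v\<in>{0..T}. \<bar>g v\<bar> \<le> B"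
proof -
  have "\<forall>u\<in>{0..T}. \<exists>e>0. \<exists>B. \<forall>v. 0 \<le> v \<and> \<bar>v - u\<bar> < e \<longrightarrow> \<bar>g v\<bar> \<le> B"
    using local_bound rc ll by auto
  then obtain e B where eB: "\<And>u. u \<in> {0..T} \<Longrightarrow> e u > 0 \<and> (\<forall>v. 0 \<le> v \<and> \<bar>v - u\<bar> < e u \<longrightarrow> \<bar>g v\<bar> \<le> B u)"
    by metis
  have "{0..T} \<subseteq> (\<Union>u\<in>{0..T}. ball u (e u))" using eB by force
  then obtain C where C: "C \<subseteq> {0..T}" "finite C" "{0..T} \<subseteq> (\<Union>u\<in>C. ball u (e u))"
    using compactE_image[OF compact_Icc, of "{0..T}" "\<lambda>u. ball u (e u)"] by blast
  have "\<forall>v\<in>{0..T}. \<bar>g v\<bar> \<le> (\<Sum>u\<in>C. \<bar>B u\<bar>)"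
  proof
    fix v assume v: "v \<in> {0..T}"
    then obtain u where u: "u \<in> C" "v \<in> ball u (e u)" using C by blast
    then have "\<bar>g v\<bar> \<le> B u" using eB[of u] C v by (auto simp: dist_real_def abs_minus_commute)
    also have "\<dots> \<le> \<bar>B u\<bar>" by simp
    also have "\<dots> \<le> (\<Sum>u\<in>C. \<bar>B u\<bar>)" using u C by (intro member_le_sum) auto
    finally show "\<bar>g v\<bar> \<le> (\<Sum>u\<in>C. \<bar>B u\<bar>)" .
  qed
  then show ?thesis by blast
qed

lemma right_cont_meas:
  fixes h :: "real \<Rightarrow> real"
  assumes rc: "\<And>u. continuous (at_right u) h"
  shows "h \<in> borel_measurable borel"
proof (rule borel_measurable_LIMSEQ_real)
  define dn where "dn n u = real_of_int \<lceil>u * real (Suc n)\<rceil> / real (Suc n)" for n u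
  show "(\<lambda>u. h (dn n u)) \<in> borel_measurable borel" for n
  proof -
    have "(\<lambda>u. \<lceil>u * real (Suc n)\<rceil>) \<in> measurable borel (count_space UNIV)" by measurable
    moreover have "(\<lambda>k::int. h (real_of_int k / real (Suc n))) \<in> measurable (count_space UNIV) borel" by simp
    ultimately have "(\<lambda>u. (\<lambda>k::int. h (real_of_int k / real (Suc n))) (\<lceil>u * real (Suc n)\<rceil>)) \<in> borel_measurable borel"
      by (rule measurable_compose)
    then show ?thesis unfolding dn_def by simp
  qed
  show "(\<lambda>n. h (dn n u)) \<longlonglongrightarrow> h u" for u
  proof -
    have "continuous (at u within {u..}) h" using rc[of u] by (simp add: at_within_Ici_at_right)
    moreover have "\<forall>n. dn n u \<in> {u..}"
    proof
      fix n
      have "u * real (Suc n) \<le> real_of_int \<lceil>u * real (Suc n)\<rceil>" by simp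
      then show "dn n u \<in> {u..}" unfolding dn_def by (simp add: field_simps)
    qed
    moreover have "(\<lambda>n. dn n u) \<longlonglongrightarrow> u"
    proof -
      have le: "dn n u \<le> u + 1 / real (Suc n)" for n
      proof -
        have a: "real_of_int \<lceil>u * real (Suc n)\<rceil> < u * real (Suc n) + 1"
          by linarith
        then have "real_of_int \<lceil>u * real (Suc n)\<rceil> / real (Suc n) \<le> (u * real (Suc n) + 1) / real (Suc n)"
          by (intro divide_right_mono) auto
        then show ?thesis unfolding dn_def by (simp add: add_divide_distrib)
      qed
      have "(\<lambda>n. 1 / real (Suc n)) \<longlonglongrightarrow> 0" using LIMSEQ_Suc[OF lim_const_over_n[of 1]] by simp
      then have "(\<lambda>n. u + 1 / real (Suc n)) \<longlonglongrightarrow> u + 0" by (intro tendsto_add tendsto_const)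
      then have up: "(\<lambda>n. u + 1 / real (Suc n)) \<longlonglongrightarrow> u" by simp
      show ?thesis
        by (rule tendsto_sandwich[OF _ _ tendsto_const up]) (use le \<open>\<forall>n. dn n u \<in> {u..}\<close> in auto)
    qed
    ultimately show ?thesis using continuous_within_sequentially[of u "{u..}" h] by (auto simp: comp_def)
  qed
qed

lemma path_integrable:
  fixes G p :: "real \<Rightarrow> real"
  assumes Gm: "G \<in> borel_measurable borel" and Gb: "\<And>x. \<bar>G x\<bar> \<le> a + b * \<bar>x\<bar>" and b: "0 \<le> b"
    and rc: "\<And>u. 0 \<le> u \<Longrightarrow> continuous (at_right u) p"
    and ll: "\<And>u. 0 < u \<Longrightarrow> \<exists>l. (p \<longlongrightarrow> l) (at_left u)" and t: "0 \<le> t"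
  shows "set_integrable lborel {0..t} (\<lambda>s. G (p s))"
proof -
  define h where "h u = p (max 0 (min t u))" for u
  have hrc: "continuous (at_right u) h" for u
  proof -
    consider "u < 0" | "0 \<le> u" "u < t" | "t \<le> u" by linarith
    then show ?thesis
    proof cases
      case 1
      have "\<forall>\<^sub>F v in at_right u. h u = h v"
        using eventually_at_right_real[OF 1] by (rule eventually_mono) (use 1 in \<open>auto simp: h_def\<close>)
      then have "(h \<longlongrightarrow> h u) (at_right u)" by (rule Lim_transform_eventually[OF tendsto_const])
      then show ?thesis unfolding continuous_within .
    next
      case 2
      have "\<forall>\<^sub>F v in at_right u. p v = h v"
        using eventually_at_right_real[OF 2(2)] by (rule eventually_mono) (use 2 in \<open>auto simp: h_def\<close>)
      moreover have "(p \<longlongrightarrow> p u) (at_right u)" using rc[OF 2(1)] unfolding continuous_within .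
      ultimately have "(h \<longlongrightarrow> p u) (at_right u)" by (rule Lim_transform_eventually[rotated])
      moreover have "h u = p u" using 2 by (simp add: h_def)
      ultimately show ?thesis unfolding continuous_within by simp
    next
      case 3
      have "\<forall>\<^sub>F v in at_right u. h u = h v"
        using eventually_at_right_real[of u "u+1"] by (rule eventually_mono) (use 3 t in \<open>auto simp: h_def\<close>)
      then have "(h \<longlongrightarrow> h u) (at_right u)" by (rule Lim_transform_eventually[OF tendsto_const])
      then show ?thesis unfolding continuous_within .
    qed
  qed
  have hm: "h \<in> borel_measurable borel" by (rule right_cont_meas[OF hrc])
  have eq: "(\<lambda>s. indicator {0..t} s *\<^sub>R G (p s)) = (\<lambda>s. indicator {0..t} s *\<^sub>R G (h s))"
    by (rule ext) (auto simp: h_def indicator_def)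
  obtain B where B: "\<And>v. v \<in> {0..t} \<Longrightarrow> \<bar>p v\<bar> \<le> B" using cadlag_bounded[OF rc ll, of t] by blast
  show ?thesis unfolding set_integrable_def eq
  proof (rule integrableI_bounded_set[where A="{0..t}" and B="a + b * B"])
    show "(\<lambda>s. indicator {0..t} s *\<^sub>R G (h s)) \<in> borel_measurable lborel"
      using Gm hm by measurable
    show "emeasure lborel {0..t} < \<infinity>" using t by (simp add: emeasure_lborel_Icc)
    show "AE x in lborel. x \<in> {0..t} \<longrightarrow> norm (indicator {0..t} x *\<^sub>R G (h x)) \<le> a + b * B"
    proof (intro AE_I2 impI)
      fix x :: real assume x: "x \<in> {0..t}"
      have "norm (indicator {0..t} x *\<^sub>R G (h x)) = \<bar>G (p x)\<bar>" using x by (simp add: h_def)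
      also have "\<dots> \<le> a + b * \<bar>p x\<bar>" by (rule Gb)
      also have "\<dots> \<le> a + b * B" using B[OF x] b by (simp add: mult_left_mono)
      finally show "norm (indicator {0..t} x *\<^sub>R G (h x)) \<le> a + b * B" .
    qed
    show "AE x in lborel. x \<notin> {0..t} \<longrightarrow> indicator {0..t} x *\<^sub>R G (h x) = 0" by simp
  qed simp
qed

lemma nf_gens_Pow: "{N r -` B \<inter> space M | r B. 0 \<le> r \<and> r \<le> t \<and> B \<in> sets (borel :: real measure)} \<subseteq> Pow (space M)"
  by auto

lemma nf_space: "space (natural_filtration M N t) = space M"
  unfolding natural_filtration_def by (rule space_measure_of[OF nf_gens_Pow])

lemma nf_sets: "sets (natural_filtration M N t) =
   sigma_sets (space M) {N r -` B \<inter> space M | r B. 0 \<le> r \<and> r \<le> t \<and> B \<in> sets (borel :: real measure)}"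
  unfolding natural_filtration_def by (rule sets_measure_of[OF nf_gens_Pow])

lemma nf_gen_in:
  assumes "0 \<le> r" "r \<le> t" "B \<in> sets borel"
  shows "N r -` B \<inter> space M \<in> sets (natural_filtration M N t)"
  unfolding nf_sets using assms by (intro sigma_sets.Basic) blast

lemma nf_subalgebra:
  assumes meas: "\<And>t. 0 \<le> t \<Longrightarrow> N t \<in> borel_measurable M"
  shows "subalgebra M (natural_filtration M N t)"
proof -
  have "{N r -` B \<inter> space M | r B. 0 \<le> r \<and> r \<le> t \<and> B \<in> sets (borel :: real measure)} \<subseteq> sets M"
    using meas by (auto intro: measurable_sets)
  then have "sets (natural_filtration M N t) \<subseteq> sets M"
    unfolding nf_sets by (rule sets.sigma_sets_subset)
  then show ?thesis unfolding subalgebra_def nf_space by simp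
qed

lemma mart_set_eq:
  assumes P: "prob_space M" and meas: "\<And>t. 0 \<le> t \<Longrightarrow> N t \<in> borel_measurable M"
    and mart: "is_martingale M (natural_filtration M N) X"
    and st: "0 \<le> s" "s \<le> t" and B: "B \<in> sets (natural_filtration M N s)"
  shows "(\<integral>\<omega>. indicator B \<omega> * X t \<omega> \<partial>M) = (\<integral>\<omega>. indicator B \<omega> * X s \<omega> \<partial>M)"
proof -
  interpret prob_space M by (rule P)
  interpret finite_measure_subalgebra M "natural_filtration M N s"
    by unfold_locales (rule nf_subalgebra[OF meas])
  have it: "integrable M (X t)" using mart st unfolding is_martingale_def by auto
  have ae: "AE \<omega> in M. real_cond_exp M (natural_filtration M N s) (X t) \<omega> = X s \<omega>"
    using mart st unfolding is_martingale_def by auto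
  have Bm[measurable]: "B \<in> sets M" using B subalg unfolding subalgebra_def by blast
  have m2[measurable]: "X s \<in> borel_measurable M" using mart st unfolding is_martingale_def by auto
  have m1[measurable]: "real_cond_exp M (natural_filtration M N s) (X t) \<in> borel_measurable M"
    by (rule borel_measurable_cond_exp2)
  have "(\<integral>\<omega>\<in>B. X t \<omega> \<partial>M) = (\<integral>\<omega>\<in>B. real_cond_exp M (natural_filtration M N s) (X t) \<omega> \<partial>M)"
    by (rule real_cond_exp_intA[OF it B])
  also have "\<dots> = (\<integral>\<omega>\<in>B. X s \<omega> \<partial>M)"
    unfolding set_lebesgue_integral_def
    by (rule integral_cong_AE) (use ae in \<open>auto elim: eventually_mono\<close>)
  finally show ?thesis unfolding set_lebesgue_integral_def by (simp add: mult.commute)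
qed

lemma incr_bound:
  fixes G p :: "real \<Rightarrow> real"
  assumes i1: "set_integrable lborel {0..t} (\<lambda>u. G (p u))" and st: "0 \<le> s" "s \<le> t"
    and GK: "\<And>x. G x \<le> K" and K: "0 \<le> K"
  shows "(LINT u:{0..t}|lborel. G (p u)) - (LINT u:{0..s}|lborel. G (p u)) \<le> K * (t - s)"
proof -
  have i2: "set_integrable lborel {0..s} (\<lambda>u. G (p u))"
    by (rule set_integrable_subset[OF i1]) (use st in auto)
  have ind: "indicator {0..t} u - indicator {0..s} u = (indicator {s<..t} u :: real)" for u :: real
    using st by (auto simp: indicator_def)
  have "(LINT u:{0..t}|lborel. G (p u)) - (LINT u:{0..s}|lborel. G (p u))
      = (\<integral>u. indicator {0..t} u * G (p u) - indicator {0..s} u * G (p u) \<partial>lborel)"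
    using i1 i2 unfolding set_lebesgue_integral_def set_integrable_def by (simp add: integral_diff)
  also have "\<dots> = (\<integral>u. indicator {s<..t} u * G (p u) \<partial>lborel)"
    by (rule Bochner_Integration.integral_cong) (auto simp: ind[symmetric] algebra_simps)
  also have "\<dots> \<le> (\<integral>u. indicator {s<..t} u * K \<partial>lborel)"
  proof (rule integral_mono')
    show "integrable lborel (\<lambda>u. indicator {s<..t} u * K)"
      using st by (intro integrable_mult_left integrable_real_indicator) (auto simp: emeasure_lborel_Ioc)
  qed (use GK K in \<open>auto simp: indicator_def\<close>)
  also have "\<dots> = K * (t - s)" using st by (simp add: measure_lborel_Ioc mult.commute)
  finally show ?thesis .
qed

lemma super_step:
  fixes f G :: "real \<Rightarrow> real" and N :: "real \<Rightarrow> 'a \<Rightarrow> real"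
  assumes P: "prob_space M" and meas: "\<And>t. 0 \<le> t \<Longrightarrow> N t \<in> borel_measurable M"
    and rc: "\<And>\<omega> u. \<omega> \<in> space M \<Longrightarrow> 0 \<le> u \<Longrightarrow> continuous (at_right u) (\<lambda>s. N s \<omega>)"
    and ll: "\<And>\<omega> u. \<omega> \<in> space M \<Longrightarrow> 0 < u \<Longrightarrow> \<exists>l. ((\<lambda>s. N s \<omega>) \<longlongrightarrow> l) (at_left u)"
    and mart: "is_martingale M (natural_filtration M N)
                 (\<lambda>t \<omega>. f (N t \<omega>) - f (N 0 \<omega>) - (LINT s:{0..t}|lborel. G (N s \<omega>)))"
    and fm: "f \<in> borel_measurable borel" and fb: "\<And>x. \<bar>f x\<bar> \<le> c"
    and Gm: "G \<in> borel_measurable borel" and Gb: "\<And>x. \<bar>G x\<bar> \<le> a + b * \<bar>x\<bar>" and b: "0 \<le> b"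
    and GK: "\<And>x. G x \<le> K" and K: "0 \<le> K"
    and st: "0 \<le> s" "s \<le> t" and B: "B \<in> sets (natural_filtration M N s)"
  shows "(\<integral>\<omega>. indicator B \<omega> * (f (N t \<omega>) - f (N s \<omega>)) \<partial>M) \<le> K * (t - s) * measure M B"
proof -
  interpret prob_space M by (rule P)
  define X where "X = (\<lambda>t \<omega>. f (N t \<omega>) - f (N 0 \<omega>) - (LINT s:{0..t}|lborel. G (N s \<omega>)))"
  define I where "I = (\<lambda>t \<omega>. (LINT s:{0..t}|lborel. G (N s \<omega>)))"
  have sub: "sets (natural_filtration M N s) \<subseteq> sets M" using nf_subalgebra[OF meas] unfolding subalgebra_def by (rule conjunct2)
  have Bm[measurable]: "B \<in> sets M" using B sub by (rule subsetD[rotated])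
  have mX: "is_martingale M (natural_filtration M N) X" unfolding X_def by (rule mart)
  have iX: "integrable M (X r)" if "0 \<le> r" for r
  proof -
    have "\<forall>t\<ge>0. integrable M (X t) \<and> X t \<in> borel_measurable (natural_filtration M N t)"
      using mX unfolding is_martingale_def by (rule conjunct1)
    then show ?thesis using that by blast
  qed
  have iF: "integrable M (\<lambda>\<omega>. f (N r \<omega>))" if "0 \<le> r" for r
  proof (rule integrable_const_bound[where B=c])
    show "AE x in M. norm (f (N r x)) \<le> c" using fb by simp
    show "(\<lambda>\<omega>. f (N r \<omega>)) \<in> borel_measurable M" using meas[OF that] fm by measurable
  qed
  have iB: "integrable M (\<lambda>\<omega>. indicator B \<omega> * h \<omega>)" if "integrable M h" for h :: "'a \<Rightarrow> real"
    using integrable_real_mult_indicator[OF Bm that] by (simp add: mult.commute)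
  have eqX: "(\<integral>\<omega>. indicator B \<omega> * X t \<omega> \<partial>M) = (\<integral>\<omega>. indicator B \<omega> * X s \<omega> \<partial>M)"
    using mart_set_eq[OF P meas mart[folded X_def] st B] .
  have i1: "integrable M (\<lambda>\<omega>. indicator B \<omega> * (f (N t \<omega>) - f (N s \<omega>)))"
    using st by (intro iB Bochner_Integration.integrable_diff iF) auto
  have i2: "integrable M (\<lambda>\<omega>. indicator B \<omega> * (X t \<omega> - X s \<omega>))"
    using st by (intro iB Bochner_Integration.integrable_diff iX) auto
  have z: "(\<integral>\<omega>. indicator B \<omega> * (X t \<omega> - X s \<omega>) \<partial>M) = 0"
  proof -
    have "(\<integral>\<omega>. indicator B \<omega> * (X t \<omega> - X s \<omega>) \<partial>M) =
          (\<integral>\<omega>. indicator B \<omega> * X t \<omega> - indicator B \<omega> * X s \<omega> \<partial>M)"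
      by (simp add: algebra_simps)
    also have "\<dots> = (\<integral>\<omega>. indicator B \<omega> * X t \<omega> \<partial>M) - (\<integral>\<omega>. indicator B \<omega> * X s \<omega> \<partial>M)"
      using st by (intro Bochner_Integration.integral_diff iB iX) auto
    finally show ?thesis using eqX by simp
  qed
  define D where "D = (\<lambda>\<omega>. indicator B \<omega> * (f (N t \<omega>) - f (N s \<omega>)) - indicator B \<omega> * (X t \<omega> - X s \<omega>))"
  have iD: "integrable M D" unfolding D_def using i1 i2 by simp
  have "(\<integral>\<omega>. indicator B \<omega> * (f (N t \<omega>) - f (N s \<omega>)) \<partial>M) = (\<integral>\<omega>. D \<omega> + indicator B \<omega> * (X t \<omega> - X s \<omega>) \<partial>M)"
    unfolding D_def by simp
  also have "\<dots> = (\<integral>\<omega>. D \<omega> \<partial>M) + (\<integral>\<omega>. indicator B \<omega> * (X t \<omega> - X s \<omega>) \<partial>M)"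
    using iD i2 by (rule Bochner_Integration.integral_add)
  also have "\<dots> = (\<integral>\<omega>. D \<omega> \<partial>M)" using z by simp
  also have "\<dots> \<le> (\<integral>\<omega>. indicator B \<omega> * (K * (t - s)) \<partial>M)"
  proof (rule integral_mono[OF iD])
    show "integrable M (\<lambda>\<omega>. indicator B \<omega> * (K * (t - s)))" by (intro iB) simp
    fix \<omega> assume \<omega>: "\<omega> \<in> space M"
    have "D \<omega> = indicator B \<omega> * (I t \<omega> - I s \<omega>)" unfolding D_def X_def I_def by (simp add: algebra_simps)
    moreover have "I t \<omega> - I s \<omega> \<le> K * (t - s)"
    proof -
      have "set_integrable lborel {0..t} (\<lambda>u. G (N u \<omega>))"
        by (rule path_integrable[OF Gm Gb b rc[OF \<omega>] ll[OF \<omega>]]) (use st in auto)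
      then show ?thesis unfolding I_def by (rule incr_bound[OF _ st GK K])
    qed
    ultimately show "D \<omega> \<le> indicator B \<omega> * (K * (t - s))" by (simp add: indicator_def)
  qed
  also have "\<dots> = K * (t - s) * measure M B" by simp
  finally show ?thesis .
qed

lemma maximal_ineq:
  fixes W :: "nat \<Rightarrow> 'a \<Rightarrow> real"
  assumes P: "prob_space M"
    and Wi: "\<And>k. integrable M (W k)"
    and Wpos: "\<And>k \<omega>. \<omega> \<in> space M \<Longrightarrow> 0 \<le> W k \<omega>"
    and step: "\<And>j. (\<integral>\<omega>. indicator {\<omega> \<in> space M. \<forall>i\<le>j. W i \<omega> < 1} \<omega> * (W (Suc j) \<omega> - W j \<omega>) \<partial>M) \<le> 0"
  shows "measure M {\<omega> \<in> space M. \<exists>k\<le>m. 1 \<le> W k \<omega>} \<le> (\<integral>\<omega>. W 0 \<omega> \<partial>M)"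
proof -
  interpret prob_space M by (rule P)
  have Wm[measurable]: "W k \<in> borel_measurable M" for k using Wi[of k] by (rule borel_measurable_integrable)
  define Bs where "Bs j = {\<omega> \<in> space M. \<forall>i\<le>j. W i \<omega> < 1}" for j
  have Bsm[measurable]: "Bs j \<in> sets M" for j unfolding Bs_def by measurable
  define S where "S j \<omega> = W 0 \<omega> + (\<Sum>i<j. indicator (Bs i) \<omega> * (W (Suc i) \<omega> - W i \<omega>))" for j \<omega>
  have inv: "(\<omega> \<in> Bs j \<longrightarrow> S j \<omega> = W j \<omega>) \<and> (\<omega> \<notin> Bs j \<longrightarrow> 1 \<le> S j \<omega>)" if \<omega>: "\<omega> \<in> space M" for j \<omega>
  proof (induction j)
    case 0
    then show ?case using \<omega> by (auto simp: S_def Bs_def)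
  next
    case (Suc j)
    have BsS: "\<omega> \<in> Bs (Suc j) \<longleftrightarrow> \<omega> \<in> Bs j \<and> W (Suc j) \<omega> < 1"
      unfolding Bs_def using \<omega> by (auto simp: le_Suc_eq)
    have SS: "S (Suc j) \<omega> = S j \<omega> + indicator (Bs j) \<omega> * (W (Suc j) \<omega> - W j \<omega>)"
      unfolding S_def by simp
    show ?case
    proof (cases "\<omega> \<in> Bs j")
      case True
      then have "S (Suc j) \<omega> = W (Suc j) \<omega>" using Suc SS by simp
      then show ?thesis using BsS True by auto
    next
      case False
      then show ?thesis using Suc SS BsS by simp
    qed
  qed
  have A: "{\<omega> \<in> space M. \<exists>k\<le>m. 1 \<le> W k \<omega>} = space M - Bs m"
    unfolding Bs_def by (auto simp: not_less)
  have iT: "integrable M (\<lambda>\<omega>. indicator (Bs i) \<omega> * (W (Suc i) \<omega> - W i \<omega>))" for i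
    using integrable_real_mult_indicator[OF Bsm Bochner_Integration.integrable_diff[OF Wi Wi]]
    by (simp add: mult.commute)
  have iS: "integrable M (S m)" unfolding S_def[abs_def]
    by (intro Bochner_Integration.integrable_add Bochner_Integration.integrable_sum Wi iT)
  have "measure M {\<omega> \<in> space M. \<exists>k\<le>m. 1 \<le> W k \<omega>} = (\<integral>\<omega>. indicator (space M - Bs m) \<omega> \<partial>M)"
    unfolding A by simp
  also have "\<dots> \<le> (\<integral>\<omega>. S m \<omega> \<partial>M)"
  proof (rule integral_mono[OF _ iS])
    show "integrable M (indicator (space M - Bs m) :: 'a \<Rightarrow> real)"
      by (intro integrable_real_indicator) (simp_all add: less_top[symmetric] emeasure_finite)
    fix \<omega> assume \<omega>: "\<omega> \<in> space M"
    show "indicator (space M - Bs m) \<omega> \<le> S m \<omega>"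
    proof (cases "\<omega> \<in> Bs m")
      case True
      then show ?thesis using inv[OF \<omega>, of m] Wpos[OF \<omega>, of m] by simp
    next
      case False
      then show ?thesis using inv[OF \<omega>, of m] \<omega> by simp
    qed
  qed
  also have "\<dots> = (\<integral>\<omega>. W 0 \<omega> \<partial>M) + (\<Sum>i<m. \<integral>\<omega>. indicator (Bs i) \<omega> * (W (Suc i) \<omega> - W i \<omega>) \<partial>M)"
    unfolding S_def
    by (subst Bochner_Integration.integral_add[OF Wi Bochner_Integration.integrable_sum[OF iT]],
        subst Bochner_Integration.integral_sum[OF iT]) (rule refl)
  also have "\<dots> \<le> (\<integral>\<omega>. W 0 \<omega> \<partial>M)"
    using step unfolding Bs_def by (simp add: sum_nonpos)
  finally show ?thesis .
qed

lemma grid_bound: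
  fixes f G :: "real \<Rightarrow> real" and N :: "real \<Rightarrow> 'a \<Rightarrow> real" and \<tau> :: "nat \<Rightarrow> real"
  assumes P: "prob_space M" and meas: "\<And>t. 0 \<le> t \<Longrightarrow> N t \<in> borel_measurable M"
    and rc: "\<And>\<omega> u. \<omega> \<in> space M \<Longrightarrow> 0 \<le> u \<Longrightarrow> continuous (at_right u) (\<lambda>s. N s \<omega>)"
    and ll: "\<And>\<omega> u. \<omega> \<in> space M \<Longrightarrow> 0 < u \<Longrightarrow> \<exists>l. ((\<lambda>s. N s \<omega>) \<longlongrightarrow> l) (at_left u)"
    and mart: "is_martingale M (natural_filtration M N)
                 (\<lambda>t \<omega>. f (N t \<omega>) - f (N 0 \<omega>) - (LINT s:{0..t}|lborel. G (N s \<omega>)))"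
    and fm: "f \<in> borel_measurable borel" and fb: "\<And>x. \<bar>f x\<bar> \<le> c" and fpos: "\<And>x. -1 \<le> f x"
    and Gm: "G \<in> borel_measurable borel" and Gb: "\<And>x. \<bar>G x\<bar> \<le> a + b * \<bar>x\<bar>" and b: "0 \<le> b"
    and GK: "\<And>x. G x \<le> K" and K: "0 \<le> K"
    and \<tau>: "mono \<tau>" "\<tau> 0 = 0" "\<And>k. \<tau> k \<le> T"
  shows "measure M {\<omega> \<in> space M. \<exists>k\<le>m. 1 \<le> f (N (\<tau> k) \<omega>) + 1 + K * (T - \<tau> k)}
          \<le> (\<integral>\<omega>. f (N 0 \<omega>) + 1 \<partial>M) + K * T"
proof -
  interpret prob_space M by (rule P)
  have \<tau>0: "0 \<le> \<tau> k" for k using \<tau>(1,2) by (metis le0 monoD)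
  define W where "W k \<omega> = f (N (\<tau> k) \<omega>) + 1 + K * (T - \<tau> k)" for k \<omega>
  have Wm: "W k \<in> borel_measurable M" for k
    unfolding W_def[abs_def] using meas[OF \<tau>0[of k]] fm by measurable
  have iF: "integrable M (\<lambda>\<omega>. f (N r \<omega>))" if "0 \<le> r" for r
  proof (rule integrable_const_bound[where B=c])
    show "AE x in M. norm (f (N r x)) \<le> c" using fb by simp
    show "(\<lambda>\<omega>. f (N r \<omega>)) \<in> borel_measurable M" using meas[OF that] fm by measurable
  qed
  have Wi: "integrable M (W k)" for k
    unfolding W_def[abs_def] using iF[OF \<tau>0[of k]]
    by (intro Bochner_Integration.integrable_add integrable_const) auto
  have Wpos: "0 \<le> W k \<omega>" for k \<omega>
    using fpos[of "N (\<tau> k) \<omega>"] K \<tau>(3)[of k] by (simp add: W_def)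
  have step: "(\<integral>\<omega>. indicator {\<omega> \<in> space M. \<forall>i\<le>j. W i \<omega> < 1} \<omega> * (W (Suc j) \<omega> - W j \<omega>) \<partial>M) \<le> 0" for j
  proof -
    define B where "B = {\<omega> \<in> space M. \<forall>i\<le>j. W i \<omega> < 1}"
    have B_eq: "B = (\<Inter>i\<in>{..j}. N (\<tau> i) -` {x. f x + 1 + K * (T - \<tau> i) < 1} \<inter> space M)"
      unfolding B_def W_def by auto
    have BF: "B \<in> sets (natural_filtration M N (\<tau> j))"
      unfolding B_eq
    proof (intro sets.finite_INT)
      fix i assume i: "i \<in> {..j}"
      show "N (\<tau> i) -` {x. f x + 1 + K * (T - \<tau> i) < 1} \<inter> space M \<in> sets (natural_filtration M N (\<tau> j))"
      proof (rule nf_gen_in)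
        show "0 \<le> \<tau> i" by (rule \<tau>0)
        show "\<tau> i \<le> \<tau> j" using i \<tau>(1) by (auto intro: monoD)
        show "{x. f x + 1 + K * (T - \<tau> i) < 1} \<in> sets borel" using fm by measurable
      qed
    qed auto
    have sub: "sets (natural_filtration M N (\<tau> j)) \<subseteq> sets M" using nf_subalgebra[OF meas] unfolding subalgebra_def by (rule conjunct2)
    have Bm: "B \<in> sets M" using BF sub by (rule subsetD[rotated])
    have st: "0 \<le> \<tau> j" "\<tau> j \<le> \<tau> (Suc j)" using \<tau>0 \<tau>(1) by (auto intro: monoD)
    have ss: "(\<integral>\<omega>. indicator B \<omega> * (f (N (\<tau> (Suc j)) \<omega>) - f (N (\<tau> j) \<omega>)) \<partial>M)
               \<le> K * (\<tau> (Suc j) - \<tau> j) * measure M B"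
      by (rule super_step[OF P meas rc ll mart fm fb Gm Gb b GK K st BF])
    have iB: "integrable M (\<lambda>\<omega>. indicator B \<omega> * h \<omega>)" if "integrable M h" for h :: "'a \<Rightarrow> real"
      using integrable_real_mult_indicator[OF Bm that] by (simp add: mult.commute)
    have "(\<integral>\<omega>. indicator B \<omega> * (W (Suc j) \<omega> - W j \<omega>) \<partial>M)
        = (\<integral>\<omega>. indicator B \<omega> * (f (N (\<tau> (Suc j)) \<omega>) - f (N (\<tau> j) \<omega>)) - indicator B \<omega> * (K * (\<tau> (Suc j) - \<tau> j)) \<partial>M)"
      unfolding W_def by (intro Bochner_Integration.integral_cong) (auto simp: algebra_simps)
    also have "\<dots> = (\<integral>\<omega>. indicator B \<omega> * (f (N (\<tau> (Suc j)) \<omega>) - f (N (\<tau> j) \<omega>)) \<partial>M)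
                   - (\<integral>\<omega>. indicator B \<omega> * (K * (\<tau> (Suc j) - \<tau> j)) \<partial>M)"
      using st \<tau>0 by (intro Bochner_Integration.integral_diff iB Bochner_Integration.integrable_diff iF integrable_const) auto
    also have "(\<integral>\<omega>. indicator B \<omega> * (K * (\<tau> (Suc j) - \<tau> j)) \<partial>M) = K * (\<tau> (Suc j) - \<tau> j) * measure M B"
      using sets.sets_into_space[OF Bm] by (simp add: Int_absorb2)
    finally show ?thesis using ss unfolding B_def by simp
  qed
  have "measure M {\<omega> \<in> space M. \<exists>k\<le>m. 1 \<le> W k \<omega>} \<le> (\<integral>\<omega>. W 0 \<omega> \<partial>M)"
    by (rule maximal_ineq[OF P Wi Wpos step])
  also have "(\<integral>\<omega>. W 0 \<omega> \<partial>M) = (\<integral>\<omega>. f (N 0 \<omega>) + 1 \<partial>M) + K * T"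
  proof -
    have "(\<integral>\<omega>. W 0 \<omega> \<partial>M) = (\<integral>\<omega>. (f (N 0 \<omega>) + 1) + K * T \<partial>M)" unfolding W_def \<tau>(2) by simp
    also have "\<dots> = (\<integral>\<omega>. f (N 0 \<omega>) + 1 \<partial>M) + (\<integral>\<omega>. K * T \<partial>M)"
      using iF[of 0] by (intro Bochner_Integration.integral_add Bochner_Integration.integrable_add integrable_const) auto
    finally show ?thesis by (simp add: prob_space)
  qed
  finally show ?thesis unfolding W_def .
qed

lemma grid_dense:
  fixes t T h :: real
  assumes t: "0 \<le> t" "t < T" and h: "0 < h"
  shows "\<exists>n k. k \<le> 2^n \<and> t < T * real k / 2^n \<and> T * real k / 2^n < t + h"
proof -
  have T: "0 < T" using t by simp
  obtain n where n: "T / h < 2^n" using real_arch_pow[of 2 "T / h"] by auto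
  have small: "T / 2^n < h" using n h T by (simp add: field_simps)
  define P where "P k \<longleftrightarrow> t < T * real k / 2^n" for k :: nat
  have P2: "P (2^n)" unfolding P_def using t by simp
  define k where "k = (LEAST k. P k)"
  have Pk: "P k" unfolding k_def by (rule LeastI[of P, OF P2])
  have kle: "k \<le> 2^n" unfolding k_def by (rule Least_le[of P, OF P2])
  have k0: "k \<noteq> 0"
  proof
    assume "k = 0"
    then show False using Pk t unfolding P_def by simp
  qed
  then have "\<not> P (k - 1)" unfolding k_def by (intro not_less_Least) (auto simp: k_def[symmetric])
  then have "T * real (k - 1) / 2^n \<le> t" unfolding P_def by simp
  moreover have "T * real (k - 1) / 2^n = T * real k / 2^n - T / 2^n" using k0 by (simp add: of_nat_diff field_simps)
  ultimately have "T * real k / 2^n < t + h" using small by linarith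
  then show ?thesis using Pk kle unfolding P_def by blast
qed

lemma grid_lift:
  fixes T :: real
  assumes "k \<le> 2^n" "n \<le> n'"
  shows "\<exists>k'. k' \<le> 2^n' \<and> T * real k' / 2^n' = T * real k / 2^n"
proof -
  have e: "(2::nat)^n' = 2^n * 2^(n' - n)" using assms(2) by (simp add: power_add[symmetric])
  have "k * 2^(n' - n) \<le> 2^n'" unfolding e using assms(1) by simp
  moreover have "T * real (k * 2^(n' - n)) / 2^n' = T * real k / 2^n"
  proof -
    have e': "(2::real)^n' = 2^n * 2^(n'-n)" using assms(2) by (simp add: power_add[symmetric])
    have "real (k * 2^(n' - n)) = real k * 2^(n'-n)" by simp
    then show ?thesis unfolding e' by (simp add: field_simps)
  qed
  ultimately show ?thesis by blast
qed

lemma bad_in_grid: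
  fixes p :: "real \<Rightarrow> real"
  assumes rc: "\<And>u. 0 \<le> u \<Longrightarrow> continuous (at_right u) p" and t: "0 \<le> t" "t \<le> T"
    and bad: "p t < 0 \<or> R < p t"
  shows "\<exists>n. \<exists>k\<le>2^n. R < p (T * real k / 2^n) \<or> p (T * real k / 2^n) \<le> - 1 / real (Suc n)"
proof -
  define Q where "Q x \<longleftrightarrow> (if R < p t then R < x else x < p t / 2)" for x
  have Qpt: "Q (p t)" unfolding Q_def using bad by auto
  have Qimp: "p t < 0" if "Q x" "\<not> R < x" for x using that bad unfolding Q_def by auto
  obtain n0 k0 where k0: "k0 \<le> 2^n0" "Q (p (T * real k0 / 2^n0))"
  proof (cases "t = T")
    case True
    then show ?thesis using that[of 1 0] Qpt by simp
  next
    case False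
    then have tT: "t < T" using t by simp
    have lim: "(p \<longlongrightarrow> p t) (at_right t)" using rc[OF t(1)] unfolding continuous_within .
    have "\<forall>\<^sub>F u in at_right t. Q (p u)"
    proof (cases "R < p t")
      case True
      show ?thesis using order_tendstoD(1)[OF lim True] by (rule eventually_mono) (simp add: Q_def True)
    next
      case False
      then have "p t < p t / 2" using bad by simp
      show ?thesis using order_tendstoD(2)[OF lim \<open>p t < p t / 2\<close>] by (rule eventually_mono) (simp add: Q_def False)
    qed
    then obtain b where b: "b > t" "\<And>y. t < y \<Longrightarrow> y < b \<Longrightarrow> Q (p y)"
      unfolding eventually_at_right_field by blast
    obtain n k where "k \<le> 2^n" "t < T * real k / 2^n" "T * real k / 2^n < t + (b - t)"
      using grid_dense[OF t(1) tT, of "b - t"] b by auto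
    then show ?thesis using that[of k n] b by auto
  qed
  show ?thesis
  proof (cases "R < p (T * real k0 / 2^n0)")
    case True
    then show ?thesis using k0 by blast
  next
    case False
    have neg: "p t < 0" using Qimp[OF k0(2) False] .
    have le: "p (T * real k0 / 2^n0) \<le> p t / 2" using k0(2) False unfolding Q_def by (auto split: if_splits)
    obtain m where m: "inverse (real (Suc m)) < - p t / 2"
      using reals_Archimedean[of "- p t / 2"] neg by auto
    define n where "n = max n0 m"
    obtain k where k: "k \<le> 2^n" "T * real k / 2^n = T * real k0 / 2^n0"
      using grid_lift[OF k0(1), of n T] by (auto simp: n_def)
    have "1 / real (Suc n) \<le> 1 / real (Suc m)" unfolding n_def by (simp add: frac_le)
    then have "p (T * real k / 2^n) \<le> - 1 / real (Suc n)" using k(2) le m by (simp add: inverse_eq_divide)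
    then show ?thesis using k(1) by blast
  qed
qed

lemma phi_one_hi: "0 < R \<Longrightarrow> 0 < d \<Longrightarrow> R \<le> x \<Longrightarrow> phi R d x = 1"
  using phi_pos[of x d R] sstep_high[of "x/R"] by simp
lemma phi_one_lo: "0 < R \<Longrightarrow> 0 < d \<Longrightarrow> x \<le> -d \<Longrightarrow> phi R d x = 1"
  using phi_neg[of x R d] sstep_high[of "-x/d"] by (simp add: field_simps)

lemma one_alpha_grid:
  fixes N :: "real \<Rightarrow> 'a \<Rightarrow> real"
  assumes char: "characteristic gd gb Pm" and Cb: "gb + (\<integral>z. snd z \<partial>Pm) \<le> C'" and C'pos: "0 < C'"
    and proc: "population_process gd gb Pm M N"
    and R: "0 < R" and d: "0 < d" and T: "0 \<le> T"
  shows "measure M {\<omega> \<in> space M. \<exists>k\<le>(2::nat)^n. R < N (T * real k / 2^n) \<omega> \<or> N (T * real k / 2^n) \<omega> \<le> -d}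
           \<le> (\<integral>\<omega>. phi R d (N 0 \<omega>) \<partial>M) + 4 / R * C' * T"
proof -
  have P: "prob_space M" and meas: "\<And>t. 0 \<le> t \<Longrightarrow> N t \<in> borel_measurable M"
    and cad: "cadlag_paths M N"
    and mart_all: "\<And>f. C2c f \<Longrightarrow> is_martingale M (natural_filtration M N)
          (\<lambda>t \<omega>. f (N t \<omega>) - f (N 0 \<omega>) - (LINT s:{0..t}|lborel. generator gd gb Pm f (N s \<omega>)))"
    using proc unfolding population_process_def by auto
  interpret prob_space M by (rule P)
  have rc: "\<And>\<omega> u. \<omega> \<in> space M \<Longrightarrow> 0 \<le> u \<Longrightarrow> continuous (at_right u) (\<lambda>s. N s \<omega>)"
    and ll: "\<And>\<omega> u. \<omega> \<in> space M \<Longrightarrow> 0 < u \<Longrightarrow> \<exists>l. ((\<lambda>s. N s \<omega>) \<longlongrightarrow> l) (at_left u)"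
    using cad unfolding cadlag_paths_def by auto
  have c: "0 \<le> gd" "0 \<le> gb" using char by (auto simp: characteristic_def)
  define L where "L = 4/R + 4/d"
  have L: "0 \<le> L" using R d by (simp add: L_def)
  define G where "G = generator gd gb Pm (tf R d)"
  define Kc where "Kc = 4 / R * C'"
  have Kc: "0 \<le> Kc" using R C'pos by (simp add: Kc_def)
  have mart: "is_martingale M (natural_filtration M N)
          (\<lambda>t \<omega>. tf R d (N t \<omega>) - tf R d (N 0 \<omega>) - (LINT s:{0..t}|lborel. G (N s \<omega>)))"
    unfolding G_def by (rule mart_all[OF C2c_tf[OF R d]])
  have fm: "tf R d \<in> borel_measurable borel" unfolding tf_def[abs_def] by measurable
  have fb: "\<bar>tf R d x\<bar> \<le> 1" for x using phi_range[OF R d, of x] by (simp add: tf_def)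
  have fpos: "-1 \<le> tf R d x" for x using phi_range[OF R d, of x] by (simp add: tf_def)
  have Gm: "G \<in> borel_measurable borel" unfolding G_def by (rule gen_meas[OF char R d])
  have Gb: "\<bar>G x\<bar> \<le> L * (gb + \<bar>\<integral>z. snd z \<partial>Pm\<bar>) + L * (gd + \<bar>\<integral>z. fst z \<partial>Pm\<bar>) * \<bar>x\<bar>" for x
  proof -
    have "\<bar>G x\<bar> \<le> L * ((gb + gd * \<bar>x\<bar>) + ((\<integral>z. snd z \<partial>Pm) + \<bar>x\<bar> * (\<integral>z. fst z \<partial>Pm)))"
      unfolding G_def L_def by (rule gen_abs[OF char R d])
    also have "\<dots> \<le> L * ((gb + gd * \<bar>x\<bar>) + (\<bar>\<integral>z. snd z \<partial>Pm\<bar> + \<bar>x\<bar> * \<bar>\<integral>z. fst z \<partial>Pm\<bar>))"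
      using L by (intro mult_left_mono add_mono order_refl abs_ge_self mult_left_mono) auto
    also have "\<dots> = L * (gb + \<bar>\<integral>z. snd z \<partial>Pm\<bar>) + L * (gd + \<bar>\<integral>z. fst z \<partial>Pm\<bar>) * \<bar>x\<bar>"
      by (simp add: algebra_simps)
    finally show ?thesis .
  qed
  have b: "0 \<le> L * (gd + \<bar>\<integral>z. fst z \<partial>Pm\<bar>)" using L c by simp
  have GK: "G x \<le> Kc" for x
  proof -
    have "G x \<le> 4/R * (gb + (\<integral>z. snd z \<partial>Pm))" unfolding G_def by (rule gen_upper[OF char R d])
    also have "\<dots> \<le> Kc" unfolding Kc_def using Cb R by (intro mult_left_mono) auto
    finally show ?thesis .
  qed
  define \<tau> where "\<tau> k = T * real (min k (2^n)) / 2^n" for k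
  have \<tau>m: "mono \<tau>" unfolding \<tau>_def mono_def using T
    by (auto intro!: divide_right_mono mult_left_mono)
  have \<tau>0: "\<tau> 0 = 0" by (simp add: \<tau>_def)
  have \<tau>T: "\<tau> k \<le> T" for k
  proof -
    have "real (min k (2^n)) \<le> 2^n" by simp
    then have "T * real (min k (2^n)) \<le> T * 2^n" using T by (intro mult_left_mono) auto
    then show ?thesis unfolding \<tau>_def by (simp add: divide_le_eq)
  qed
  have gbd: "measure M {\<omega> \<in> space M. \<exists>k\<le>2^n. 1 \<le> tf R d (N (\<tau> k) \<omega>) + 1 + Kc * (T - \<tau> k)}
          \<le> (\<integral>\<omega>. tf R d (N 0 \<omega>) + 1 \<partial>M) + Kc * T"
    by (rule grid_bound[OF P meas rc ll mart fm fb fpos Gm Gb b GK Kc \<tau>m \<tau>0 \<tau>T])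
  have \<tau>0': "0 \<le> \<tau> k" for k using \<tau>m \<tau>0 by (metis le0 monoD)
  have [measurable]: "N (\<tau> k) \<in> borel_measurable M" for k by (rule meas[OF \<tau>0'])
  have Sm: "{\<omega> \<in> space M. \<exists>k\<le>(2::nat)^n. 1 \<le> tf R d (N (\<tau> k) \<omega>) + 1 + Kc * (T - \<tau> k)} \<in> sets M"
    using fm by measurable
  have sub: "{\<omega> \<in> space M. \<exists>k\<le>(2::nat)^n. R < N (T * real k / 2^n) \<omega> \<or> N (T * real k / 2^n) \<omega> \<le> -d}
      \<subseteq> {\<omega> \<in> space M. \<exists>k\<le>(2::nat)^n. 1 \<le> tf R d (N (\<tau> k) \<omega>) + 1 + Kc * (T - \<tau> k)}"
  proof
    fix \<omega> assume "\<omega> \<in> {\<omega> \<in> space M. \<exists>k\<le>(2::nat)^n. R < N (T * real k / 2^n) \<omega> \<or> N (T * real k / 2^n) \<omega> \<le> -d}"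
    then obtain k where \<omega>: "\<omega> \<in> space M" and k: "k \<le> (2::nat)^n"
      and h: "R < N (T * real k / 2^n) \<omega> \<or> N (T * real k / 2^n) \<omega> \<le> -d" by blast
    have tk: "\<tau> k = T * real k / 2^n" using k by (simp add: \<tau>_def)
    have "phi R d (N (\<tau> k) \<omega>) = 1" using h unfolding tk
      by (auto intro: phi_one_hi[OF R d] phi_one_lo[OF R d])
    moreover have "0 \<le> Kc * (T - \<tau> k)" using Kc \<tau>T[of k] by simp
    ultimately show "\<omega> \<in> {\<omega> \<in> space M. \<exists>k\<le>(2::nat)^n. 1 \<le> tf R d (N (\<tau> k) \<omega>) + 1 + Kc * (T - \<tau> k)}"
      using k \<omega> by (auto simp: tf_def)
  qed
  have "measure M {\<omega> \<in> space M. \<exists>k\<le>(2::nat)^n. R < N (T * real k / 2^n) \<omega> \<or> N (T * real k / 2^n) \<omega> \<le> -d}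
      \<le> measure M {\<omega> \<in> space M. \<exists>k\<le>(2::nat)^n. 1 \<le> tf R d (N (\<tau> k) \<omega>) + 1 + Kc * (T - \<tau> k)}"
    by (rule finite_measure_mono[OF sub Sm])
  also have "\<dots> \<le> (\<integral>\<omega>. tf R d (N 0 \<omega>) + 1 \<partial>M) + Kc * T" by (rule gbd)
  also have "(\<integral>\<omega>. tf R d (N 0 \<omega>) + 1 \<partial>M) = (\<integral>\<omega>. phi R d (N 0 \<omega>) \<partial>M)" by (simp add: tf_def)
  finally show ?thesis by (simp add: Kc_def)
qed

lemma phi_N0_bound:
  fixes N0 :: "'a \<Rightarrow> real"
  assumes P: "prob_space M" and N0_rv: "N0 \<in> borel_measurable M"
    and pos: "\<And>\<omega>. \<omega> \<in> space M \<Longrightarrow> 0 < N0 \<omega>"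
    and K0: "closed K0" "\<And>x. x \<in> K0 \<Longrightarrow> \<bar>x\<bar> \<le> B0" and tK: "measure M {\<omega> \<in> space M. N0 \<omega> \<in> K0} \<ge> 1 - e"
    and R: "0 < R" "2 * B0 \<le> R" and d: "0 < d"
  shows "(\<integral>\<omega>. phi R d (N0 \<omega>) \<partial>M) \<le> e"
proof -
  interpret prob_space M by (rule P)
  define A where "A = {\<omega> \<in> space M. N0 \<omega> \<in> K0}"
  have Am: "A \<in> sets M" unfolding A_def using N0_rv borel_closed[OF K0(1)] by measurable
  have "(\<integral>\<omega>. phi R d (N0 \<omega>) \<partial>M) \<le> (\<integral>\<omega>. indicator (space M - A) \<omega> \<partial>M)"
  proof (rule integral_mono)
    show "integrable M (\<lambda>\<omega>. phi R d (N0 \<omega>))"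
    proof (rule integrable_const_bound[where B=1])
      show "AE x in M. norm (phi R d (N0 x)) \<le> 1" using phi_range[OF R(1) d] by (simp add: abs_le_iff)
      show "(\<lambda>\<omega>. phi R d (N0 \<omega>)) \<in> borel_measurable M" using N0_rv by measurable
    qed
    show "integrable M (indicator (space M - A) :: 'a \<Rightarrow> real)"
      using Am by (intro integrable_real_indicator) (auto simp: less_top[symmetric] emeasure_finite)
    fix \<omega> assume \<omega>: "\<omega> \<in> space M"
    show "phi R d (N0 \<omega>) \<le> indicator (space M - A) \<omega>"
    proof (cases "\<omega> \<in> A")
      case True
      then have "N0 \<omega> \<le> B0" "0 < N0 \<omega>" using K0(2) pos[OF \<omega>] unfolding A_def by force+
      then have "N0 \<omega> / R \<le> 1/2" using R by (simp add: field_simps)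
      then have "phi R d (N0 \<omega>) = 0" using phi_pos[of "N0 \<omega>" d R] \<open>0 < N0 \<omega>\<close> d sstep_low by simp
      then show ?thesis by simp
    next
      case False
      then show ?thesis using \<omega> phi_range[OF R(1) d] by simp
    qed
  qed
  also have "\<dots> = measure M (space M - A)" using Am by simp
  also have "\<dots> = 1 - measure M A" using Am by (rule prob_compl)
  also have "\<dots> \<le> e" using tK unfolding A_def by simp
  finally show ?thesis .
qed

theorem corollary3p2:
  fixes gd gb :: "'i \<Rightarrow> real"
    and Pm :: "'i \<Rightarrow> (real \<times> real) measure"
    and M :: "'i \<Rightarrow> 'a measure"
    and N0 :: "'i \<Rightarrow> 'a \<Rightarrow> real"
    and N :: "'i \<Rightarrow> real \<Rightarrow> 'a \<Rightarrow> real"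
  assumes char: "\<And>\<alpha>. characteristic (gd \<alpha>) (gb \<alpha>) (Pm \<alpha>)"
    and bdd: "\<exists>C. \<forall>\<alpha>. gb \<alpha> + (\<integral>z. snd z \<partial>Pm \<alpha>) \<le> C"
    and proc: "\<And>\<alpha>. population_process (gd \<alpha>) (gb \<alpha>) (Pm \<alpha>) (M \<alpha>) (N \<alpha>)"
    and N0_rv: "\<And>\<alpha>. N0 \<alpha> \<in> borel_measurable (M \<alpha>)"
    and N0_pos: "\<And>\<alpha> \<omega>. \<omega> \<in> space (M \<alpha>) \<Longrightarrow> 0 < N0 \<alpha> \<omega>"
    and tight: "\<And>e. 0 < e \<Longrightarrow> \<exists>K. compact K \<and>
                  (\<forall>\<alpha>. measure (M \<alpha>) {\<omega> \<in> space (M \<alpha>). N0 \<alpha> \<omega> \<in> K} \<ge> 1 - e)"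
    and start: "\<And>\<alpha> \<omega>. \<omega> \<in> space (M \<alpha>) \<Longrightarrow> N \<alpha> 0 \<omega> = N0 \<alpha> \<omega>"
    and T: "0 \<le> T" and e: "0 < \<epsilon>"
  shows "\<exists>\<Gamma>. compact \<Gamma> \<and> \<Gamma> \<subseteq> {0..} \<and>
           (\<forall>\<alpha>. measure (M \<alpha>) {\<omega> \<in> space (M \<alpha>). \<forall>t\<in>{0..T}. N \<alpha> t \<omega> \<in> \<Gamma>} \<ge> 1 - \<epsilon>)"
proof -
  obtain C where C: "\<And>\<alpha>. gb \<alpha> + (\<integral>z. snd z \<partial>Pm \<alpha>) \<le> C" using bdd by blast
  define C' where "C' = max C 1"
  have C'pos: "0 < C'" by (simp add: C'_def)
  have C': "gb \<alpha> + (\<integral>z. snd z \<partial>Pm \<alpha>) \<le> C'" for \<alpha>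
    using C[of \<alpha>] by (simp add: C'_def le_max_iff_disj)
  obtain K0 where K0: "compact K0" "\<And>\<alpha>. measure (M \<alpha>) {\<omega> \<in> space (M \<alpha>). N0 \<alpha> \<omega> \<in> K0} \<ge> 1 - \<epsilon>/2"
    using tight[of "\<epsilon>/2"] e by auto
  obtain B0 where B0: "\<And>x. x \<in> K0 \<Longrightarrow> \<bar>x\<bar> \<le> B0"
    using compact_imp_bounded[OF K0(1)] unfolding bounded_real by blast
  define R where "R = max (2 * \<bar>B0\<bar> + 2) (8 * C' * T / \<epsilon> + 1)"
  have R0: "0 < R" unfolding R_def by simp
  have RB: "2 * \<bar>B0\<bar> \<le> R" unfolding R_def by simp
  have RT: "4 / R * C' * T \<le> \<epsilon> / 2"
  proof -
    have "8 * C' * T / \<epsilon> \<le> R" unfolding R_def by simp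
    then have "8 * C' * T \<le> R * \<epsilon>" using e by (simp add: divide_le_eq)
    then show ?thesis using R0 e by (simp add: field_simps)
  qed
  show ?thesis
  proof (intro exI[of _ "{0..R}"] conjI allI)
    show "compact {0..R}" by simp
    show "{0..R} \<subseteq> {0..}" by auto
    fix \<alpha>
    have P: "prob_space (M \<alpha>)" and meas: "\<And>t. 0 \<le> t \<Longrightarrow> N \<alpha> t \<in> borel_measurable (M \<alpha>)"
      and cad: "cadlag_paths (M \<alpha>) (N \<alpha>)"
      using proc[of \<alpha>] unfolding population_process_def by auto
    interpret prob_space "M \<alpha>" by (rule P)
    have rc: "\<And>\<omega> u. \<omega> \<in> space (M \<alpha>) \<Longrightarrow> 0 \<le> u \<Longrightarrow> continuous (at_right u) (\<lambda>s. N \<alpha> s \<omega>)"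
      using cad unfolding cadlag_paths_def by auto
    define gp where "gp n k = T * real k / 2^n" for n :: nat and k :: nat
    have gp0: "0 \<le> gp n k" for n k using T by (simp add: gp_def)
    have gpT: "k \<le> 2^n \<Longrightarrow> gp n k \<le> T" for n k
    proof -
      assume "k \<le> 2^n"
      then have "real k \<le> 2^n" by (metis of_nat_le_iff of_nat_numeral of_nat_power)
      then have "T * real k \<le> T * 2^n" using T by (intro mult_left_mono) auto
      then show ?thesis unfolding gp_def by (simp add: divide_le_eq)
    qed
    have [measurable]: "N \<alpha> (gp n k) \<in> borel_measurable (M \<alpha>)" for n k by (rule meas[OF gp0])
    define E where "E n = {\<omega> \<in> space (M \<alpha>). \<exists>k\<le>(2::nat)^n. R < N \<alpha> (gp n k) \<omega> \<or> N \<alpha> (gp n k) \<omega> \<le> -1 / real (Suc n)}" for n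
    define E' where "E' n = {\<omega> \<in> space (M \<alpha>). \<exists>k\<le>(2::nat)^n. N \<alpha> (gp n k) \<omega> \<notin> {0..R}}" for n
    have Em: "E n \<in> sets (M \<alpha>)" for n unfolding E_def by measurable
    have E'm: "E' n \<in> sets (M \<alpha>)" for n unfolding E'_def by measurable
    have Eb: "measure (M \<alpha>) (E n) \<le> \<epsilon>" for n
    proof -
      have d: "0 < 1 / real (Suc n)" by simp
      have "measure (M \<alpha>) (E n) \<le> (\<integral>\<omega>. phi R (1 / real (Suc n)) (N \<alpha> 0 \<omega>) \<partial>M \<alpha>) + 4 / R * C' * T"
        using one_alpha_grid[OF char C'[of \<alpha>] C'pos proc R0 d T, of n] unfolding E_def gp_def by simp
      also have "(\<integral>\<omega>. phi R (1 / real (Suc n)) (N \<alpha> 0 \<omega>) \<partial>M \<alpha>) = (\<integral>\<omega>. phi R (1 / real (Suc n)) (N0 \<alpha> \<omega>) \<partial>M \<alpha>)"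
        by (rule Bochner_Integration.integral_cong) (simp_all add: start)
      also have "\<dots> \<le> \<epsilon> / 2"
        by (rule phi_N0_bound[OF P N0_rv N0_pos compact_imp_closed[OF K0(1)] _ K0(2) R0 _ d])
           (use B0 RB in \<open>auto intro: order_trans[OF _ abs_ge_self]\<close>)
      finally show ?thesis using RT by simp
    qed
    have Einc: "incseq E"
    proof (rule incseq_SucI)
      fix n show "E n \<subseteq> E (Suc n)"
      proof
        fix \<omega> assume "\<omega> \<in> E n"
        then obtain k where \<omega>: "\<omega> \<in> space (M \<alpha>)" and k: "k \<le> 2^n"
          and h: "R < N \<alpha> (gp n k) \<omega> \<or> N \<alpha> (gp n k) \<omega> \<le> -1 / real (Suc n)" unfolding E_def by blast
        obtain k' where k': "k' \<le> 2^(Suc n)" "gp (Suc n) k' = gp n k"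
          using grid_lift[OF k, of "Suc n" T] unfolding gp_def by auto
        have "-1 / real (Suc n) \<le> -1 / real (Suc (Suc n))" by (simp add: frac_le)
        then show "\<omega> \<in> E (Suc n)" using h k' \<omega> unfolding E_def by force
      qed
    qed
    define Good where "Good = {\<omega> \<in> space (M \<alpha>). \<forall>t\<in>{0..T}. N \<alpha> t \<omega> \<in> {0..R}}"
    have bad: "\<exists>n. \<omega> \<in> E n" if \<omega>: "\<omega> \<in> space (M \<alpha>)" "\<omega> \<notin> Good" for \<omega>
    proof -
      obtain t where t: "t \<in> {0..T}" "N \<alpha> t \<omega> \<notin> {0..R}" using \<omega> unfolding Good_def by blast
      have "N \<alpha> t \<omega> < 0 \<or> R < N \<alpha> t \<omega>" using t by auto
      moreover have t0: "0 \<le> t" "t \<le> T" using t by auto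
      ultimately obtain n k where "k \<le> 2^n" "R < N \<alpha> (gp n k) \<omega> \<or> N \<alpha> (gp n k) \<omega> \<le> -1 / real (Suc n)"
        using bad_in_grid[OF rc[OF \<omega>(1)] t0] unfolding gp_def by blast
      then show ?thesis using \<omega> unfolding E_def by blast
    qed
    have Good_eq: "Good = space (M \<alpha>) - (\<Union>n. E' n)"
    proof
      show "Good \<subseteq> space (M \<alpha>) - (\<Union>n. E' n)"
        unfolding Good_def E'_def using gp0 gpT by fastforce
      show "space (M \<alpha>) - (\<Union>n. E' n) \<subseteq> Good"
      proof
        fix \<omega> assume \<omega>: "\<omega> \<in> space (M \<alpha>) - (\<Union>n. E' n)"
        show "\<omega> \<in> Good"
        proof (rule ccontr)
          assume "\<omega> \<notin> Good"
          then obtain n where "\<omega> \<in> E n" using bad \<omega> by blast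
          moreover have "E n \<subseteq> E' n"
          proof -
            have neg: "- 1 / real (Suc n) < 0" by simp
            show ?thesis
            proof
              fix x assume "x \<in> E n"
              then obtain k where xk: "x \<in> space (M \<alpha>)" "k \<le> 2^n" and h: "R < N \<alpha> (gp n k) x \<or> N \<alpha> (gp n k) x \<le> -1 / real (Suc n)"
                unfolding E_def by blast
              have "N \<alpha> (gp n k) x \<notin> {0..R}"
              proof
                assume "N \<alpha> (gp n k) x \<in> {0..R}"
                then have "0 \<le> N \<alpha> (gp n k) x" "N \<alpha> (gp n k) x \<le> R" by auto
                then show False using h neg by linarith
              qed
              then show "x \<in> E' n" unfolding E'_def using xk by blast
            qed
          qed
          ultimately show False using \<omega> by blast
        qed
      qed
    qed
    have Gm: "Good \<in> sets (M \<alpha>)" unfolding Good_eq using E'm by auto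
    have "measure (M \<alpha>) (space (M \<alpha>) - Good) \<le> measure (M \<alpha>) (\<Union>n. E n)"
      by (rule finite_measure_mono) (use bad Em in auto)
    also have "\<dots> \<le> \<epsilon>"
    proof -
      have "(\<lambda>n. measure (M \<alpha>) (E n)) \<longlonglongrightarrow> measure (M \<alpha>) (\<Union>n. E n)"
        by (rule finite_Lim_measure_incseq) (use Em Einc in auto)
      then show ?thesis by (rule LIMSEQ_le_const2) (use Eb in auto)
    qed
    finally have "measure (M \<alpha>) (space (M \<alpha>) - Good) \<le> \<epsilon>" .
    then have "1 - \<epsilon> \<le> measure (M \<alpha>) Good" using prob_compl[OF Gm] by simp
    then show "1 - \<epsilon> \<le> measure (M \<alpha>) {\<omega> \<in> space (M \<alpha>). \<forall>t\<in>{0..T}. N \<alpha> t \<omega> \<in> {0..R}}"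
      unfolding Good_def .
  qed
qed


end
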